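(* Fix $q\in[1,\infty)$ and assume that the measures $\nu^*_s=\mathrm{Law}(f^*(\boldsymbol X,S)\mid S=s)$, $s\in[K]$, are non-atomic with finite $q$-th moments. Then for every $\alpha\in[0,1]$ a solution $f^*_{\alpha,q}$ of $$\min_{f:\mathbb R^p\times[K]\to\mathbb R}\big\{\mathcal R_q(f)\;:\;\mathcal U_q(f)\le\alpha\,\mathcal U_q(f^* )\big\}$$ can be written, for all $(\boldsymbol x,s)\in\mathbb R^p\times[K]$, as $$f^*_{\alpha,q}(\boldsymbol x,s)=\alpha^{1/q}f^*(\boldsymbol x,s)+(1-\alpha^{1/q})\cdot\arg\min_{y\in\mathbb R}\Big\{\sum_{s'=1}^Kw_{s'}\big|F^{-1}_{\nu^*_{s'}}\circ F_{\nu^*_s}\circ f^*(\boldsymbol x,s)-y\big|^q\Big\},$$ and it holds that $\mathcal R_q(f^*_{\alpha,q})=(1-\alpha^{1/q})^q\,\mathcal U_q(f^* )$ and $\mathcal U_q(f^*_{\alpha,q})=\alpha\,\mathcal U_q(f^* )$.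
   Context: $(\boldsymbol X,S)$ random in $\mathbb R^p\times[K]$ with $\mathbb P(S=s)>0$; $f^*$ measurable; $\boldsymbol w\in\Delta^{K-1}$. $\mathcal R_q(f)=\sum_sw_s\mathbb E[|f(\boldsymbol X,S)-f^*(\boldsymbol X,S)|^q\mid S=s]$ and $\mathcal U_q(f)=\min_{\nu\in\mathcal P_q(\mathbb R)}\sum_sw_s\mathsf W_q^q(\mathrm{Law}(f(\boldsymbol X,S)\mid S=s),\nu)$, where $\mathcal P_q(\mathbb R)$ is the set of probability measures with finite $q$-th moment and $\mathsf W_q$ the Wasserstein-$q$ distance. $F_\mu$ is the CDF and $F^{-1}_\mu(u)=\inf\{x:F_\mu(x)\ge u\}$. For $q=1$ the $\arg\min$ may not be a singleton; the formula is to be read with a suitable choice of minimizer. *)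

theory Defs
  imports "HOL-Probability.Probability"
begin

definition cond_meas :: "'a measure \<Rightarrow> ('a \<Rightarrow> nat) \<Rightarrow> nat \<Rightarrow> 'a measure" where
  "cond_meas M S s = uniform_measure M {\<omega> \<in> space M. S \<omega> = s}"

definition cond_law :: "'a measure \<Rightarrow> ('a \<Rightarrow> 'x) \<Rightarrow> ('a \<Rightarrow> nat) \<Rightarrow> ('x \<Rightarrow> nat \<Rightarrow> real)
    \<Rightarrow> nat \<Rightarrow> real measure" where
  "cond_law M X S f s = distr (cond_meas M S s) borel (\<lambda>\<omega>. f (X \<omega>) (S \<omega>))"

definition Pq :: "real \<Rightarrow> real measure set" where
  "Pq q = {\<nu>. sets \<nu> = sets borel \<and> prob_space \<nu> \<and> (\<integral>\<^sup>+ x. ennreal (\<bar>x\<bar> powr q) \<partial>\<nu>) < \<infinity>}"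

definition couplings :: "real measure \<Rightarrow> real measure \<Rightarrow> (real \<times> real) measure set" where
  "couplings \<mu> \<nu> = {\<pi>. sets \<pi> = sets (borel \<Otimes>\<^sub>M borel) \<and> prob_space \<pi> \<and>
      distr \<pi> borel fst = \<mu> \<and> distr \<pi> borel snd = \<nu>}"

definition Wq_pow :: "real \<Rightarrow> real measure \<Rightarrow> real measure \<Rightarrow> ennreal" where
  "Wq_pow q \<mu> \<nu> = (INF \<pi> \<in> couplings \<mu> \<nu>. \<integral>\<^sup>+ z. ennreal (\<bar>fst z - snd z\<bar> powr q) \<partial>\<pi>)"

definition risk_q :: "'a measure \<Rightarrow> ('a \<Rightarrow> 'x) \<Rightarrow> ('a \<Rightarrow> nat) \<Rightarrow> nat \<Rightarrow> (nat \<Rightarrow> real) \<Rightarrow> real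
    \<Rightarrow> ('x \<Rightarrow> nat \<Rightarrow> real) \<Rightarrow> ('x \<Rightarrow> nat \<Rightarrow> real) \<Rightarrow> ennreal" where
  "risk_q M X S K w q fstar f =
     (\<Sum>s\<in>{1..K}. ennreal (w s) *
        (\<integral>\<^sup>+ \<omega>. ennreal (\<bar>f (X \<omega>) (S \<omega>) - fstar (X \<omega>) (S \<omega>)\<bar> powr q) \<partial>cond_meas M S s))"

text \<open>Unfairness U_q(f) = min over nu in P_q of sum_s w_s W_q^q(Law(f(X,S)|S=s), nu)
  (written as an infimum; the minimum is attained).\<close>
definition unfair_q :: "'a measure \<Rightarrow> ('a \<Rightarrow> 'x) \<Rightarrow> ('a \<Rightarrow> nat) \<Rightarrow> nat \<Rightarrow> (nat \<Rightarrow> real) \<Rightarrow> real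
    \<Rightarrow> ('x \<Rightarrow> nat \<Rightarrow> real) \<Rightarrow> ennreal" where
  "unfair_q M X S K w q f =
     (INF \<nu> \<in> Pq q. \<Sum>s\<in>{1..K}. ennreal (w s) * Wq_pow q (cond_law M X S f s) \<nu>)"

definition quantile :: "real measure \<Rightarrow> real \<Rightarrow> real" where
  "quantile \<mu> u = Inf {x. cdf \<mu> x \<ge> u}"

end

theory Submission
  imports Defs
begin

definition Lu :: "real measure" where "Lu = restrict_space lborel {0<..<1}"

lemma space_Lu[simp]: "space Lu = {0<..<1}"
  by (simp add: Lu_def space_restrict_space)

lemma sets_Lu: "sets Lu = sets (restrict_space borel {0<..<1::real})"
  by (simp add: Lu_def sets_restrict_space)

lemma prob_space_Lu: "prob_space Lu"
  unfolding Lu_def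
  by (auto simp add: emeasure_restrict_space space_restrict_space intro!: prob_spaceI)

lemma cdfd: "real_distribution \<mu> \<Longrightarrow> cdf_distribution \<mu>"
  by (simp add: cdf_distribution_def)

lemma quantile_I: "quantile \<mu> u = Inf {x. u \<le> cdf \<mu> x}"
  by (simp add: quantile_def)

lemma distr_Q:
  assumes "real_distribution \<mu>" shows "distr Lu borel (quantile \<mu>) = \<mu>"
proof -
  have "(quantile \<mu>) = (\<lambda>u. Inf {x. u \<le> cdf \<mu> x})" by (simp add: quantile_I[abs_def])
  then show ?thesis using cdf_distribution.distr_I_eq_M[OF cdfd[OF assms]] by (simp add: Lu_def)
qed

lemma Q_meas[measurable]:
  assumes "real_distribution \<mu>" shows "quantile \<mu> \<in> borel_measurable Lu"
proof -
  have "(\<lambda>u. Inf {x. u \<le> cdf \<mu> x}) \<in> borel_measurable (restrict_space borel {0<..<1})"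
    by (rule cdf_distribution.measurable_CI[OF cdfd[OF assms]])
  then show ?thesis unfolding measurable_cong_sets[OF sets_Lu refl] quantile_def .
qed

lemma Q_galois:
  assumes "real_distribution \<mu>" "0 < u" "u < 1"
  shows "quantile \<mu> u \<le> x \<longleftrightarrow> u \<le> cdf \<mu> x"
proof -
  interpret cdf_distribution \<mu> using cdfd[OF assms(1)] .
  show ?thesis using pseudoinverse[OF assms(2,3), of x] by (simp add: quantile_I)
qed

lemma Q_mono:
  assumes "real_distribution \<mu>" "0 < u" "u \<le> v" "v < 1"
  shows "quantile \<mu> u \<le> quantile \<mu> v"
proof -
  interpret cdf_distribution \<mu> using cdfd[OF assms(1)] .
  show ?thesis using mono_I assms unfolding mono_on_def by (simp add: quantile_I)
qed

lemma F_Q: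
  assumes "real_distribution \<mu>" "\<forall>x. measure \<mu> {x} = 0" "0 < u" "u < 1"
  shows "cdf \<mu> (quantile \<mu> u) = u"
proof -
  interpret real_distribution \<mu> by fact
  define q0 where "q0 = quantile \<mu> u"
  have ge: "u \<le> cdf \<mu> q0" using Q_galois[OF assms(1,3,4), of q0] by (simp add: q0_def)
  have lt: "cdf \<mu> y < u" if "y < q0" for y
    using Q_galois[OF assms(1,3,4), of y] that by (auto simp: q0_def)
  have "isCont (cdf \<mu>) q0" using isCont_cdf assms(2) by simp
  then have "(cdf \<mu> \<longlongrightarrow> cdf \<mu> q0) (at_left q0)"
    by (simp add: isCont_def filterlim_at_split)
  moreover have "eventually (\<lambda>y. cdf \<mu> y \<le> u) (at_left q0)"
    unfolding eventually_at_left_field using lt by (intro exI[of _ "q0 - 1"]) (auto intro: less_imp_le)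
  ultimately have "cdf \<mu> q0 \<le> u"
    by (rule tendsto_upperbound) simp
  with ge show ?thesis by (simp add: q0_def)
qed

definition LS :: "real \<Rightarrow> real \<Rightarrow> real \<Rightarrow> (real \<times> real) set" where
  "LS q a b = {(x,s). a \<le> x \<and> x < b \<and> 0 < s \<and> s < (b - x) powr (q - 1)}"

lemma LS_sets[measurable]: "LS q a b \<in> sets borel"
proof -
  have "LS q a b = {z \<in> space (borel \<Otimes>\<^sub>M borel). a \<le> fst z \<and> fst z < b \<and> 0 < snd z \<and> snd z < (b - fst z) powr (q - 1)}"
    by (auto simp: LS_def space_pair_measure)
  also have "\<dots> \<in> sets (borel \<Otimes>\<^sub>M borel)" by measurable
  finally show ?thesis by (metis borel_prod)
qed

lemma FTC_pow:
  fixes q a b :: real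
  assumes "q \<ge> 1" "a \<le> b"
  shows "((\<lambda>x. (b - x) powr (q - 1)) has_integral (b - a) powr q / q) {a..b}"
proof -
  define F where "F x = - ((b - x) powr q / q)" for x
  have "((\<lambda>x. (b - x) powr (q - 1)) has_integral (F b - F a)) {a..b}"
  proof (rule fundamental_theorem_of_calculus_interior[where f=F])
    show "a \<le> b" by fact
    show "continuous_on {a..b} F" unfolding F_def using assms
      by (intro continuous_intros continuous_on_powr') auto
    fix x assume x: "x \<in> {a<..<b}"
    have "(F has_real_derivative (b - x) powr (q - 1)) (at x)"
      unfolding F_def using x assms
      by (auto intro!: derivative_eq_intros simp: powr_diff field_simps)
    then show "(F has_vector_derivative (b - x) powr (q - 1)) (at x)"
      by (simp add: has_real_derivative_iff_has_vector_derivative)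
  qed
  then show ?thesis by (simp add: F_def)
qed

lemma emeasure_LS:
  fixes q a b :: real
  assumes "q \<ge> 1" "a \<le> b"
  shows "emeasure lborel (LS q a b) = ennreal ((b - a) powr q / q)"
proof -
  have "emeasure lborel (LS q a b) = (\<integral>\<^sup>+ z. indicator (LS q a b) z \<partial>(lborel \<Otimes>\<^sub>M lborel))"
    by (simp add: lborel_prod)
  also have "\<dots> = (\<integral>\<^sup>+ x. \<integral>\<^sup>+ s. indicator (LS q a b) (x, s) \<partial>lborel \<partial>lborel)"
    by (rule lborel.nn_integral_fst[symmetric]) (simp add: lborel_prod)
  also have "\<dots> = (\<integral>\<^sup>+ x. ennreal ((b - x) powr (q - 1)) * indicator {a..b} x \<partial>lborel)"
  proof (rule nn_integral_cong)
    fix x :: real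
    show "(\<integral>\<^sup>+ s. indicator (LS q a b) (x, s) \<partial>lborel) = ennreal ((b - x) powr (q - 1)) * indicator {a..b} x"
    proof (cases "a \<le> x \<and> x < b")
      case True
      then have "(\<lambda>s. indicator (LS q a b) (x, s) :: ennreal) = indicator {0<..<(b - x) powr (q - 1)}"
        by (auto simp: LS_def indicator_def fun_eq_iff)
      then show ?thesis using True by simp
    next
      case False
      then have "(\<lambda>s. indicator (LS q a b) (x, s) :: ennreal) = (\<lambda>_. 0)"
        by (auto simp: LS_def indicator_def fun_eq_iff)
      then show ?thesis using False by (auto simp: indicator_def)
    qed
  qed
  also have "\<dots> = ennreal ((b - a) powr q / q)"
    by (rule nn_integral_has_integral_lebesgue'[OF _ FTC_pow[OF assms]]) simp
  finally show ?thesis .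
qed

lemma LC:
  fixes q a b :: real
  assumes "q \<ge> 1"
  shows "ennreal (\<bar>a - b\<bar> powr q) = ennreal q * (emeasure lborel (LS q a b) + emeasure lborel (LS q b a))"
proof -
  have *: "ennreal (\<bar>a - b\<bar> powr q) = ennreal q * (emeasure lborel (LS q a b) + emeasure lborel (LS q b a))"
    if "a \<le> b" for a b :: real
  proof -
    have "LS q b a = {}" using that by (auto simp: LS_def)
    then have "ennreal q * (emeasure lborel (LS q a b) + emeasure lborel (LS q b a)) = ennreal q * ennreal ((b - a) powr q / q)"
      using emeasure_LS[OF assms that] by simp
    also have "\<dots> = ennreal ((b - a) powr q)"
      using assms by (simp add: ennreal_mult[symmetric])
    finally show ?thesis using that by (simp add: abs_if)
  qed
  show ?thesis
  proof (cases "a \<le> b")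
    case True then show ?thesis using * by simp
  next
    case False
    then have "ennreal (\<bar>b - a\<bar> powr q) = ennreal q * (emeasure lborel (LS q b a) + emeasure lborel (LS q a b))"
      using *[of b a] by simp
    then show ?thesis by (simp add: abs_minus_commute add.commute)
  qed
qed

lemma space_borel_pair[simp]: "space (borel \<Otimes>\<^sub>M borel) = UNIV"
  by (simp add: space_pair_measure)

lemma Key:
  assumes mu: "real_distribution \<mu>" and nu: "real_distribution \<nu>"
    and pi: "prob_space \<pi>" "sets \<pi> = sets (borel \<Otimes>\<^sub>M borel)"
    and m1: "distr \<pi> borel fst = \<mu>" and m2: "distr \<pi> borel snd = \<nu>"
    and V: "V \<in> sets borel" "\<And>b b'. b \<in> V \<Longrightarrow> b \<le> b' \<Longrightarrow> b' \<in> V"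
  shows "emeasure Lu {u \<in> space Lu. quantile \<mu> u \<le> x \<and> quantile \<nu> u \<in> V} \<le> emeasure \<pi> ({..x} \<times> V)"
proof -
  interpret P: prob_space \<pi> by fact
  interpret L: prob_space Lu by (rule prob_space_Lu)
  have spi: "space \<pi> = UNIV" using sets_eq_imp_space_eq[OF pi(2)] by simp
  have mfst: "fst \<in> measurable \<pi> borel" unfolding measurable_cong_sets[OF pi(2) refl] by (rule measurable_fst)
  have msnd: "snd \<in> measurable \<pi> borel" unfolding measurable_cong_sets[OF pi(2) refl] by (rule measurable_snd)
  have AV: "{..x} \<times> V \<in> sets \<pi>" "{..x} \<times> UNIV \<in> sets \<pi>" "UNIV \<times> V \<in> sets \<pi>"
    "{..x} \<times> (- V) \<in> sets \<pi>" "UNIV \<times> (- V) \<in> sets \<pi>"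
    unfolding pi(2) using V(1) by (auto intro!: pair_measureI simp del: borel_prod)
  have pA: "measure \<pi> ({..x} \<times> UNIV) = measure \<mu> {..x}"
  proof -
    have "{..x} \<times> UNIV = fst -` {..x} \<inter> space \<pi>" using spi by auto
    then show ?thesis using measure_distr[OF mfst, of "{..x}"] m1 by simp
  qed
  have pV: "measure \<pi> (UNIV \<times> V) = measure \<nu> V"
  proof -
    have "UNIV \<times> V = snd -` V \<inter> space \<pi>" using spi by auto
    then show ?thesis using measure_distr[OF msnd, of V] m2 V(1) by simp
  qed
  have pnV: "measure \<pi> (UNIV \<times> (- V)) = 1 - measure \<nu> V"
  proof -
    have "measure \<pi> (UNIV \<times> (- V)) = measure \<pi> (space \<pi> - (UNIV \<times> V))"
      using spi by (intro arg_cong[where f="measure \<pi>"]) auto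
    also have "\<dots> = 1 - measure \<pi> (UNIV \<times> V)" using AV P.prob_compl by simp
    finally show ?thesis using pV by simp
  qed
  have "measure \<pi> ({..x} \<times> UNIV) = measure \<pi> ({..x} \<times> V) + measure \<pi> ({..x} \<times> (- V))"
    using AV by (subst P.finite_measure_Union[symmetric]) (auto intro!: arg_cong[where f="measure \<pi>"])
  moreover have "measure \<pi> ({..x} \<times> (- V)) \<le> measure \<pi> (UNIV \<times> (- V))"
    using AV by (intro P.finite_measure_mono) auto
  ultimately have lowpi: "measure \<mu> {..x} + measure \<nu> V - 1 \<le> measure \<pi> ({..x} \<times> V)"
    using pA pnV by linarith
  define E1 where "E1 = {u \<in> space Lu. quantile \<mu> u \<le> x}"
  define E2 where "E2 = {u \<in> space Lu. quantile \<nu> u \<in> V}"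
  have Qm[measurable]: "quantile \<mu> \<in> borel_measurable Lu" "quantile \<nu> \<in> borel_measurable Lu"
    using Q_meas mu nu by auto
  have E[measurable]: "E1 \<in> sets Lu" "E2 \<in> sets Lu"
    unfolding E1_def E2_def using V(1) by measurable
  have LE1: "measure Lu E1 = measure \<mu> {..x}"
    using measure_distr[OF Qm(1), of "{..x}"] distr_Q[OF mu] by (simp add: E1_def vimage_def Int_def conj_commute)
  have LE2: "measure Lu E2 = measure \<nu> V"
    using measure_distr[OF Qm(2), of V] distr_Q[OF nu] V(1) by (simp add: E2_def vimage_def Int_def conj_commute)
  have eq: "{u \<in> space Lu. quantile \<mu> u \<le> x \<and> quantile \<nu> u \<in> V} = E1 \<inter> E2"
    by (auto simp: E1_def E2_def)
  have "measure Lu (E1 \<inter> E2) \<le> measure \<pi> ({..x} \<times> V)"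
  proof (cases "E1 \<inter> E2 = {}")
    case True then show ?thesis by simp
  next
    case False
    then obtain u0 where u0: "u0 \<in> E1" "u0 \<in> E2" by auto
    have "E1 \<union> E2 = space Lu"
    proof
      show "E1 \<union> E2 \<subseteq> space Lu" by (auto simp: E1_def E2_def)
      show "space Lu \<subseteq> E1 \<union> E2"
      proof
        fix u assume u: "u \<in> space Lu"
        show "u \<in> E1 \<union> E2"
        proof (cases "u \<le> u0")
          case True
          then have "quantile \<mu> u \<le> quantile \<mu> u0"
            using u u0 by (intro Q_mono[OF mu]) (auto simp: E1_def)
          then show ?thesis using u u0 by (auto simp: E1_def)
        next
          case False
          then have "quantile \<nu> u0 \<le> quantile \<nu> u"
            using u u0 by (intro Q_mono[OF nu]) (auto simp: E1_def)
          then show ?thesis using u u0 V(2) by (auto simp: E2_def)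
        qed
      qed
    qed
    then have "measure Lu (E1 \<inter> E2) = measure Lu E1 + measure Lu E2 - 1"
    proof -
      have "measure Lu (E1 \<union> E2) = measure Lu E1 + measure Lu (E2 - E1)"
        using E by (rule L.finite_measure_Union')
      also have "measure Lu (E2 - E1) = measure Lu E2 - measure Lu (E2 \<inter> E1)"
        using E by (intro L.finite_measure_Diff')
      finally show ?thesis using \<open>E1 \<union> E2 = space Lu\<close> L.prob_space by (simp add: Int_commute)
    qed
    then show ?thesis using lowpi LE1 LE2 by simp
  qed
  then show ?thesis
    using eq AV(1) E by (simp add: L.emeasure_eq_measure P.emeasure_eq_measure)
qed

definition Vq :: "real \<Rightarrow> real \<times> real \<Rightarrow> real set" where
  "Vq q \<theta> = {b. fst \<theta> < b \<and> 0 < snd \<theta> \<and> snd \<theta> < (b - fst \<theta>) powr (q - 1)}"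

lemma Vq_sets[measurable]: "Vq q \<theta> \<in> sets borel"
proof -
  have "Vq q \<theta> = {b \<in> space borel. fst \<theta> < b \<and> 0 < snd \<theta> \<and> snd \<theta> < (b - fst \<theta>) powr (q - 1)}"
    by (simp add: Vq_def)
  also have "\<dots> \<in> sets borel" by measurable
  finally show ?thesis .
qed

lemma Vq_up: "q \<ge> 1 \<Longrightarrow> b \<in> Vq q \<theta> \<Longrightarrow> b \<le> b' \<Longrightarrow> b' \<in> Vq q \<theta>"
  unfolding Vq_def using powr_mono2[of "q - 1" "b - fst \<theta>" "b' - fst \<theta>"] by auto

lemma LS_Vq: "(\<theta> \<in> LS q a b) \<longleftrightarrow> a \<le> fst \<theta> \<and> b \<in> Vq q \<theta>"
  by (cases \<theta>) (auto simp: LS_def Vq_def)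

lemma IR:
  assumes q: "q \<ge> 1" and P: "sigma_finite_measure P" "sets P = sets (borel \<Otimes>\<^sub>M borel)"
  shows "(\<integral>\<^sup>+ z. ennreal (\<bar>fst z - snd z\<bar> powr q) \<partial>P) =
    ennreal q * (\<integral>\<^sup>+ \<theta>. emeasure P ({..fst \<theta>} \<times> Vq q \<theta>) + emeasure P (Vq q \<theta> \<times> {..fst \<theta>}) \<partial>lborel)"
proof -
  interpret PP: pair_sigma_finite P lborel
    using P(1) by (simp add: pair_sigma_finite_def lborel.sigma_finite_measure_axioms)
  define g where "g z \<theta> = (indicator (LS q (fst z) (snd z)) \<theta> + indicator (LS q (snd z) (fst z)) \<theta> :: ennreal)"
    for z :: "real \<times> real" and \<theta> :: "real \<times> real"
  have gm: "case_prod g \<in> borel_measurable (P \<Otimes>\<^sub>M lborel)"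
  proof -
    have gm0: "case_prod g \<in> borel_measurable ((borel \<Otimes>\<^sub>M borel) \<Otimes>\<^sub>M (borel \<Otimes>\<^sub>M borel))"
      unfolding g_def LS_def by (simp add: indicator_def) measurable
    have ss: "sets (P \<Otimes>\<^sub>M lborel) = sets ((borel \<Otimes>\<^sub>M borel) \<Otimes>\<^sub>M (borel \<Otimes>\<^sub>M borel :: (real \<times> real) measure))"
      using sets_pair_measure_cong[OF P(2), of lborel "borel \<Otimes>\<^sub>M borel"] by (simp only: sets_lborel borel_prod) blast
    show ?thesis unfolding measurable_cong_sets[OF ss refl] by (rule gm0)
  qed
  have "(\<integral>\<^sup>+ z. ennreal (\<bar>fst z - snd z\<bar> powr q) \<partial>P) = (\<integral>\<^sup>+ z. ennreal q * (\<integral>\<^sup>+ \<theta>. g z \<theta> \<partial>lborel) \<partial>P)"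
    by (intro nn_integral_cong) (simp add: LC[OF q] g_def nn_integral_add)
  also have "\<dots> = ennreal q * (\<integral>\<^sup>+ z. (\<integral>\<^sup>+ \<theta>. g z \<theta> \<partial>lborel) \<partial>P)"
    by (rule nn_integral_cmult[OF lborel.borel_measurable_nn_integral[OF gm]])
  also have "(\<integral>\<^sup>+ z. (\<integral>\<^sup>+ \<theta>. g z \<theta> \<partial>lborel) \<partial>P) = (\<integral>\<^sup>+ \<theta>. (\<integral>\<^sup>+ z. g z \<theta> \<partial>P) \<partial>lborel)"
    using PP.Fubini'[OF gm] by simp
  also have "\<dots> = (\<integral>\<^sup>+ \<theta>. emeasure P ({..fst \<theta>} \<times> Vq q \<theta>) + emeasure P (Vq q \<theta> \<times> {..fst \<theta>}) \<partial>lborel)"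
  proof (rule nn_integral_cong)
    fix \<theta> :: "real \<times> real"
    have s1: "{..fst \<theta>} \<times> Vq q \<theta> \<in> sets P" "Vq q \<theta> \<times> {..fst \<theta>} \<in> sets P"
      using P(2) by (auto intro!: pair_measureI simp del: borel_prod)
    have "(\<lambda>z. g z \<theta>) = (\<lambda>z. indicator ({..fst \<theta>} \<times> Vq q \<theta>) z + indicator (Vq q \<theta> \<times> {..fst \<theta>}) z)"
      by (auto simp: g_def fun_eq_iff indicator_def LS_Vq)
    then show "(\<integral>\<^sup>+ z. g z \<theta> \<partial>P) = emeasure P ({..fst \<theta>} \<times> Vq q \<theta>) + emeasure P (Vq q \<theta> \<times> {..fst \<theta>})"
      using s1 by (simp add: nn_integral_add)
  qed
  finally show ?thesis .
qed

lemma coupling_pair: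
  assumes f: "f \<in> borel_measurable N" and g: "g \<in> borel_measurable N" and N: "prob_space N"
    and "distr N borel f = \<mu>" "distr N borel g = \<nu>"
  shows "distr N (borel \<Otimes>\<^sub>M borel) (\<lambda>u. (f u, g u)) \<in> couplings \<mu> \<nu>"
proof -
  have m: "(\<lambda>u. (f u, g u)) \<in> measurable N (borel \<Otimes>\<^sub>M borel)"
    using f g by (rule measurable_Pair)
  have "distr (distr N (borel \<Otimes>\<^sub>M borel) (\<lambda>u. (f u, g u))) borel fst = distr N borel f"
    by (subst distr_distr[OF measurable_fst m]) (simp add: comp_def)
  moreover have "distr (distr N (borel \<Otimes>\<^sub>M borel) (\<lambda>u. (f u, g u))) borel snd = distr N borel g"
    by (subst distr_distr[OF measurable_snd m]) (simp add: comp_def)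
  ultimately show ?thesis
    using assms prob_space.prob_space_distr[OF N m] unfolding couplings_def by simp
qed

lemma coupling_Q:
  assumes "real_distribution \<mu>" "real_distribution \<nu>"
  shows "distr Lu (borel \<Otimes>\<^sub>M borel) (\<lambda>u. (quantile \<mu> u, quantile \<nu> u)) \<in> couplings \<mu> \<nu>"
  using assms by (intro coupling_pair Q_meas prob_space_Lu distr_Q)

lemma coupling_swap:
  assumes "\<pi> \<in> couplings \<mu> \<nu>"
  shows "distr \<pi> (borel \<Otimes>\<^sub>M borel) prod.swap \<in> couplings \<nu> \<mu>"
proof -
  have s: "sets \<pi> = sets (borel \<Otimes>\<^sub>M borel)" "prob_space \<pi>" "distr \<pi> borel fst = \<mu>" "distr \<pi> borel snd = \<nu>"
    using assms by (auto simp: couplings_def)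
  have f: "fst \<in> borel_measurable \<pi>" unfolding measurable_cong_sets[OF s(1) refl] by (rule measurable_fst)
  have g: "snd \<in> borel_measurable \<pi>" unfolding measurable_cong_sets[OF s(1) refl] by (rule measurable_snd)
  have sw: "prod.swap = (\<lambda>u. (snd u, fst u))" by (auto simp: fun_eq_iff)
  show ?thesis unfolding sw by (rule coupling_pair[OF g f s(2) s(4) s(3)])
qed

lemma W1D:
  fixes q :: real
  assumes q: "q \<ge> 1" and mu: "real_distribution \<mu>" and nu: "real_distribution \<nu>"
  shows "Wq_pow q \<mu> \<nu> = (\<integral>\<^sup>+ u. ennreal (\<bar>quantile \<mu> u - quantile \<nu> u\<bar> powr q) \<partial>Lu)"
proof (rule antisym)
  define \<pi>0 where "\<pi>0 = distr Lu (borel \<Otimes>\<^sub>M borel) (\<lambda>u. (quantile \<mu> u, quantile \<nu> u))"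
  have c0: "\<pi>0 \<in> couplings \<mu> \<nu>" unfolding \<pi>0_def by (rule coupling_Q[OF mu nu])
  have mQ: "(\<lambda>u. (quantile \<mu> u, quantile \<nu> u)) \<in> measurable Lu (borel \<Otimes>\<^sub>M borel)"
    using Q_meas[OF mu] Q_meas[OF nu] by (rule measurable_Pair)
  have I0: "(\<integral>\<^sup>+ z. ennreal (\<bar>fst z - snd z\<bar> powr q) \<partial>\<pi>0) = (\<integral>\<^sup>+ u. ennreal (\<bar>quantile \<mu> u - quantile \<nu> u\<bar> powr q) \<partial>Lu)"
  proof -
    have "(\<lambda>z::real\<times>real. ennreal (\<bar>fst z - snd z\<bar> powr q)) \<in> borel_measurable (borel \<Otimes>\<^sub>M borel)"
      by measurable
    then show ?thesis unfolding \<pi>0_def by (simp add: nn_integral_distr[OF mQ])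
  qed
  show "Wq_pow q \<mu> \<nu> \<le> (\<integral>\<^sup>+ u. ennreal (\<bar>quantile \<mu> u - quantile \<nu> u\<bar> powr q) \<partial>Lu)"
    unfolding Wq_pow_def I0[symmetric] using c0 by (rule INF_lower)
  show "(\<integral>\<^sup>+ u. ennreal (\<bar>quantile \<mu> u - quantile \<nu> u\<bar> powr q) \<partial>Lu) \<le> Wq_pow q \<mu> \<nu>"
    unfolding Wq_pow_def
  proof (rule INF_greatest)
    fix \<pi> assume pi: "\<pi> \<in> couplings \<mu> \<nu>"
    have s: "sets \<pi> = sets (borel \<Otimes>\<^sub>M borel)" "prob_space \<pi>" "distr \<pi> borel fst = \<mu>" "distr \<pi> borel snd = \<nu>"
      using pi by (auto simp: couplings_def)
    define \<pi>' where "\<pi>' = distr \<pi> (borel \<Otimes>\<^sub>M borel) prod.swap"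
    have s': "sets \<pi>' = sets (borel \<Otimes>\<^sub>M borel)" "prob_space \<pi>'" "distr \<pi>' borel fst = \<nu>" "distr \<pi>' borel snd = \<mu>"
      using coupling_swap[OF pi] by (auto simp: couplings_def \<pi>'_def)
    have s0: "sets \<pi>0 = sets (borel \<Otimes>\<^sub>M borel)" "prob_space \<pi>0"
      using c0 by (auto simp: couplings_def)
    have sw: "emeasure \<pi> (V \<times> A) = emeasure \<pi>' (A \<times> V)" if "V \<in> sets borel" "A \<in> sets borel" for A V
    proof -
      have ms: "prod.swap \<in> measurable \<pi> (borel \<Otimes>\<^sub>M borel)"
      proof -
        have f: "fst \<in> borel_measurable \<pi>" unfolding measurable_cong_sets[OF s(1) refl] by (rule measurable_fst)
        have g: "snd \<in> borel_measurable \<pi>" unfolding measurable_cong_sets[OF s(1) refl] by (rule measurable_snd)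
        have sw: "prod.swap = (\<lambda>u. (snd u, fst u))" by (auto simp: fun_eq_iff)
        show ?thesis unfolding sw by (rule measurable_Pair[OF g f])
      qed
      have "A \<times> V \<in> sets (borel \<Otimes>\<^sub>M borel)" using that by (intro pair_measureI)
      moreover have "prod.swap -` (A \<times> V) \<inter> space \<pi> = V \<times> A"
        using sets_eq_imp_space_eq[OF s(1)] by (auto simp: space_pair_measure)
      ultimately show ?thesis unfolding \<pi>'_def by (simp add: emeasure_distr[OF ms])
    qed
    have e0: "emeasure \<pi>0 (A \<times> V) = emeasure Lu {u \<in> space Lu. quantile \<mu> u \<in> A \<and> quantile \<nu> u \<in> V}"
      if "V \<in> sets borel" "A \<in> sets borel" for A V
    proof -
      have "A \<times> V \<in> sets (borel \<Otimes>\<^sub>M borel)" using that by (intro pair_measureI)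
      then show ?thesis unfolding \<pi>0_def by (simp add: emeasure_distr[OF mQ] vimage_def Int_def conj_commute)
    qed
    have "(\<integral>\<^sup>+ u. ennreal (\<bar>quantile \<mu> u - quantile \<nu> u\<bar> powr q) \<partial>Lu)
        = ennreal q * (\<integral>\<^sup>+ \<theta>. emeasure \<pi>0 ({..fst \<theta>} \<times> Vq q \<theta>) + emeasure \<pi>0 (Vq q \<theta> \<times> {..fst \<theta>}) \<partial>lborel)"
      unfolding I0[symmetric]
      by (rule IR[OF q _ s0(1)]) (simp add: s0(2) prob_space_imp_sigma_finite)
    also have "\<dots> \<le> ennreal q * (\<integral>\<^sup>+ \<theta>. emeasure \<pi> ({..fst \<theta>} \<times> Vq q \<theta>) + emeasure \<pi> (Vq q \<theta> \<times> {..fst \<theta>}) \<partial>lborel)"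
    proof (intro mult_left_mono nn_integral_mono add_mono)
      fix \<theta> :: "real \<times> real"
      have "emeasure \<pi>0 ({..fst \<theta>} \<times> Vq q \<theta>) = emeasure Lu {u \<in> space Lu. quantile \<mu> u \<le> fst \<theta> \<and> quantile \<nu> u \<in> Vq q \<theta>}"
        by (simp add: e0)
      also have "\<dots> \<le> emeasure \<pi> ({..fst \<theta>} \<times> Vq q \<theta>)"
        by (rule Key[OF mu nu s(2) s(1) s(3) s(4) Vq_sets Vq_up[OF q]])
      finally show "emeasure \<pi>0 ({..fst \<theta>} \<times> Vq q \<theta>) \<le> emeasure \<pi> ({..fst \<theta>} \<times> Vq q \<theta>)" .
      have "emeasure \<pi>0 (Vq q \<theta> \<times> {..fst \<theta>}) = emeasure Lu {u \<in> space Lu. quantile \<nu> u \<le> fst \<theta> \<and> quantile \<mu> u \<in> Vq q \<theta>}"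
        by (simp add: e0 conj_commute)
      also have "\<dots> \<le> emeasure \<pi>' ({..fst \<theta>} \<times> Vq q \<theta>)"
        by (rule Key[OF nu mu s'(2) s'(1) s'(3) s'(4) Vq_sets Vq_up[OF q]])
      also have "\<dots> = emeasure \<pi> (Vq q \<theta> \<times> {..fst \<theta>})"
        by (simp add: sw)
      finally show "emeasure \<pi>0 (Vq q \<theta> \<times> {..fst \<theta>}) \<le> emeasure \<pi> (Vq q \<theta> \<times> {..fst \<theta>})" .
    qed simp
    also have "\<dots> = (\<integral>\<^sup>+ z. ennreal (\<bar>fst z - snd z\<bar> powr q) \<partial>\<pi>)"
      by (rule IR[OF q _ s(1), symmetric]) (simp add: s(2) prob_space_imp_sigma_finite)
    finally show "(\<integral>\<^sup>+ u. ennreal (\<bar>quantile \<mu> u - quantile \<nu> u\<bar> powr q) \<partial>Lu) \<le> (\<integral>\<^sup>+ z. ennreal (\<bar>fst z - snd z\<bar> powr q) \<partial>\<pi>)" .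
  qed
qed

lemma CV0:
  fixes q x y t :: real
  assumes q: "q \<ge> 1" and x: "x \<ge> 0" and y: "y \<ge> 0" and t: "0 \<le> t" "t \<le> 1"
  shows "((1 - t) * x + t * y) powr q \<le> (1 - t) * x powr q + t * y powr q"
proof (cases "x > 0 \<and> y > 0")
  case True
  then show ?thesis using convex_onD[OF powr_convex[OF q], of t x y] t by simp
next
  case False
  have tq: "t powr q \<le> t" using powr_mono'[of 1 q t] t q by simp
  have tq': "(1 - t) powr q \<le> 1 - t" using powr_mono'[of 1 q "1 - t"] t q by simp
  show ?thesis
  proof (cases "x = 0")
    case True
    then have "((1 - t) * x + t * y) powr q = t powr q * y powr q" by (simp add: powr_mult)
    also have "\<dots> \<le> t * y powr q" using tq by (intro mult_right_mono) auto
    finally show ?thesis using True by simp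
  next
    case False
    then have "y = 0" using \<open>\<not> (x > 0 \<and> y > 0)\<close> x y by auto
    then have "((1 - t) * x + t * y) powr q = (1 - t) powr q * x powr q" by (simp add: powr_mult)
    also have "\<dots> \<le> (1 - t) * x powr q" using tq' by (intro mult_right_mono) auto
    finally show ?thesis using \<open>y = 0\<close> by simp
  qed
qed

lemma CV:
  fixes q x y t :: real
  assumes q: "q \<ge> 1" and t: "0 \<le> t" "t \<le> 1"
  shows "\<bar>(1 - t) * x + t * y\<bar> powr q \<le> (1 - t) * \<bar>x\<bar> powr q + t * \<bar>y\<bar> powr q"
proof -
  have "\<bar>(1 - t) * x + t * y\<bar> \<le> \<bar>(1 - t) * x\<bar> + \<bar>t * y\<bar>" by (rule abs_triangle_ineq)
  also have "\<dots> = (1 - t) * \<bar>x\<bar> + t * \<bar>y\<bar>" using t by (simp add: abs_mult)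
  finally
  have "\<bar>(1 - t) * x + t * y\<bar> powr q \<le> ((1 - t) * \<bar>x\<bar> + t * \<bar>y\<bar>) powr q"
    using q by (intro powr_mono2) auto
  also have "\<dots> \<le> (1 - t) * \<bar>x\<bar> powr q + t * \<bar>y\<bar> powr q"
    using CV0[OF q _ _ t] by simp
  finally show ?thesis .
qed

lemma alg0:
  fixes a b u v P X Y :: real
  shows "(a + b) * P * (u * X + v * Y) = P * (((a + b) * u) * X + ((a + b) * v) * Y)"
  by (simp add: algebra_simps)

lemma alg1:
  fixes a b A B P X Y :: real
  assumes "a + b \<noteq> 0" "A \<noteq> 0" "B \<noteq> 0"
  shows "(a + b) * P * ((a / (a + b)) * (X / A) + (b / (a + b)) * (Y / B)) = P * ((a / A) * X + (b / B) * Y)"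
proof -
  have e: "(a + b) * (a / (a + b)) = a" "(a + b) * (b / (a + b)) = b" using assms by simp_all
  show ?thesis unfolding alg0 e by simp
qed

lemma Mink_pt:
  fixes q a b x y :: real
  assumes q: "q \<ge> 1" and a: "a > 0" and b: "b > 0"
  shows "\<bar>x + y\<bar> powr q \<le> (a + b) powr (q - 1) * (a powr (1 - q) * \<bar>x\<bar> powr q + b powr (1 - q) * \<bar>y\<bar> powr q)"
proof -
  define t where "t = b / (a + b)"
  have t: "0 \<le> t" "t \<le> 1" "1 - t = a / (a + b)" using a b by (auto simp: t_def field_simps)
  have h1: "(1 - t) * (x / a) = x / (a + b)" using a b by (simp add: t(3))
  have h2: "t * (y / b) = y / (a + b)" using a b by (simp add: t_def)
  have "x + y = (a + b) * ((1 - t) * (x / a) + t * (y / b))"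
  proof -
    have ab: "a + b \<noteq> 0" using a b by simp
    show ?thesis unfolding h1 h2 using ab by (simp add: add_divide_distrib[symmetric])
  qed
  then have "\<bar>x + y\<bar> powr q = (a + b) powr q * \<bar>(1 - t) * (x / a) + t * (y / b)\<bar> powr q"
    using a b by (simp add: abs_mult powr_mult)
  also have "\<dots> \<le> (a + b) powr q * ((1 - t) * \<bar>x / a\<bar> powr q + t * \<bar>y / b\<bar> powr q)"
    by (intro mult_left_mono CV[OF q t(1,2)]) auto
  also have "\<dots> = (a + b) powr (q - 1) * (a powr (1 - q) * \<bar>x\<bar> powr q + b powr (1 - q) * \<bar>y\<bar> powr q)"
  proof -
    have e1: "(a + b) powr q = (a + b) * (a + b) powr (q - 1)" using a b
      by (simp add: powr_diff)
    have e2: "\<bar>x / a\<bar> powr q = \<bar>x\<bar> powr q / a powr q" "\<bar>y / b\<bar> powr q = \<bar>y\<bar> powr q / b powr q"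
      using a b by (auto simp: powr_divide)
    have e3: "a powr (1 - q) = a / a powr q" "b powr (1 - q) = b / b powr q"
      using a b by (auto simp: powr_diff)
    have ne: "a + b \<noteq> 0" "a powr q \<noteq> 0" "b powr q \<noteq> 0" using a b by auto
    show ?thesis unfolding e1 e2 e3 t(3) unfolding t_def using alg1[OF ne] by (simp add: mult.assoc)
  qed
  finally show ?thesis .
qed

lemma Mink:
  fixes q a b :: real and N :: "'a measure" and I :: "nat set" and w :: "nat \<Rightarrow> real"
    and f g :: "nat \<Rightarrow> 'a \<Rightarrow> real"
  assumes q: "q \<ge> 1" and a: "a > 0" and b: "b > 0" and I: "finite I" and w: "\<And>s. w s \<ge> 0"
    and fm: "\<And>s. s \<in> I \<Longrightarrow> f s \<in> borel_measurable N" and gm: "\<And>s. s \<in> I \<Longrightarrow> g s \<in> borel_measurable N"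
    and fa: "(\<Sum>s\<in>I. ennreal (w s) * (\<integral>\<^sup>+ x. ennreal (\<bar>f s x\<bar> powr q) \<partial>N)) \<le> ennreal (a powr q)"
    and gb: "(\<Sum>s\<in>I. ennreal (w s) * (\<integral>\<^sup>+ x. ennreal (\<bar>g s x\<bar> powr q) \<partial>N)) \<le> ennreal (b powr q)"
  shows "(\<Sum>s\<in>I. ennreal (w s) * (\<integral>\<^sup>+ x. ennreal (\<bar>f s x + g s x\<bar> powr q) \<partial>N)) \<le> ennreal ((a + b) powr q)"
proof -
  define ca where "ca = a powr (1 - q)"
  define cb where "cb = b powr (1 - q)"
  define C where "C = (a + b) powr (q - 1)"
  have pos: "ca \<ge> 0" "cb \<ge> 0" "C \<ge> 0" by (auto simp: ca_def cb_def C_def)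
  have "(\<Sum>s\<in>I. ennreal (w s) * (\<integral>\<^sup>+ x. ennreal (\<bar>f s x + g s x\<bar> powr q) \<partial>N))
      \<le> (\<Sum>s\<in>I. ennreal (w s) * (\<integral>\<^sup>+ x. ennreal C * (ennreal ca * ennreal (\<bar>f s x\<bar> powr q) + ennreal cb * ennreal (\<bar>g s x\<bar> powr q)) \<partial>N))"
  proof (intro sum_mono mult_left_mono nn_integral_mono)
    fix s x
    show "ennreal (\<bar>f s x + g s x\<bar> powr q) \<le> ennreal C * (ennreal ca * ennreal (\<bar>f s x\<bar> powr q) + ennreal cb * ennreal (\<bar>g s x\<bar> powr q))"
      using Mink_pt[OF q a b, of "f s x" "g s x"] pos
      by (simp add: ennreal_mult[symmetric] ennreal_plus[symmetric] C_def ca_def cb_def del: ennreal_plus)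
  qed simp
  also have "\<dots> = ennreal C * (ennreal ca * (\<Sum>s\<in>I. ennreal (w s) * (\<integral>\<^sup>+ x. ennreal (\<bar>f s x\<bar> powr q) \<partial>N))
        + ennreal cb * (\<Sum>s\<in>I. ennreal (w s) * (\<integral>\<^sup>+ x. ennreal (\<bar>g s x\<bar> powr q) \<partial>N)))"
  proof -
    have "(\<integral>\<^sup>+ x. ennreal C * (ennreal ca * ennreal (\<bar>f s x\<bar> powr q) + ennreal cb * ennreal (\<bar>g s x\<bar> powr q)) \<partial>N)
      = ennreal C * (ennreal ca * (\<integral>\<^sup>+ x. ennreal (\<bar>f s x\<bar> powr q) \<partial>N) + ennreal cb * (\<integral>\<^sup>+ x. ennreal (\<bar>g s x\<bar> powr q) \<partial>N))"
      if s: "s \<in> I" for s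
      using fm[OF s] gm[OF s] by (simp add: nn_integral_cmult nn_integral_add)
    then show ?thesis
      by (simp add: sum_distrib_left sum.distrib algebra_simps)
  qed
  also have "\<dots> \<le> ennreal C * (ennreal ca * ennreal (a powr q) + ennreal cb * ennreal (b powr q))"
    by (intro mult_left_mono add_mono fa gb) auto
  also have "\<dots> = ennreal (C * (ca * a powr q + cb * b powr q))"
    using pos by (simp add: ennreal_mult[symmetric] ennreal_plus[symmetric] del: ennreal_plus)
  also have "C * (ca * a powr q + cb * b powr q) = (a + b) powr q"
  proof -
    have "ca * a powr q = a" "cb * b powr q = b" using a b
      by (auto simp: ca_def cb_def powr_add[symmetric])
    moreover have "C * (a + b) = (a + b) powr q" using a b
      by (simp add: C_def powr_diff)
    ultimately show ?thesis by simp
  qed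
  finally show ?thesis .
qed

definition Phi :: "(nat \<Rightarrow> real) \<Rightarrow> nat \<Rightarrow> real \<Rightarrow> (nat \<Rightarrow> real) \<Rightarrow> real \<Rightarrow> real" where
  "Phi w K q c y = (\<Sum>s\<in>{1..K}. w s * \<bar>c s - y\<bar> powr q)"

definition lam :: "(nat \<Rightarrow> real) \<Rightarrow> nat \<Rightarrow> real \<Rightarrow> (nat \<Rightarrow> real) \<Rightarrow> real" where
  "lam w K q c = Inf {y. \<forall>z. Phi w K q c y \<le> Phi w K q c z}"

lemma Phi_cont: "q > 0 \<Longrightarrow> continuous_on S (Phi w K q c)"
  unfolding Phi_def by (intro continuous_intros continuous_on_powr') auto

locale wsetup =
  fixes w :: "nat \<Rightarrow> real" and K :: nat and q :: real
  assumes K: "K \<ge> 1" and w: "\<And>s. w s \<ge> 0" and wsum: "(\<Sum>s\<in>{1..K}. w s) = 1" and q: "q \<ge> 1"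
begin

lemma wpos: "\<exists>s\<in>{1..K}. w s > 0"
proof (rule ccontr)
  assume "\<not> ?thesis"
  then have "\<forall>s\<in>{1..K}. w s = 0" using w by (metis less_eq_real_def)
  then have "(\<Sum>s\<in>{1..K}. w s) = 0" by simp
  then show False using wsum by simp
qed

abbreviation "lo c \<equiv> Min (c ` {1..K})"
abbreviation "hi c \<equiv> Max (c ` {1..K})"

lemma lohi: "s \<in> {1..K} \<Longrightarrow> lo c \<le> c s \<and> c s \<le> hi c"
  by auto

lemma lo_le_hi: "lo c \<le> hi c"
  using lohi[of 1 c] K by auto

lemma Phi_above: assumes "y > hi c" shows "Phi w K q c y > Phi w K q c (hi c)"
  unfolding Phi_def
proof (rule sum_strict_mono_ex1)
  show "\<forall>s\<in>{1..K}. w s * \<bar>c s - hi c\<bar> powr q \<le> w s * \<bar>c s - y\<bar> powr q"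
  proof
    fix s assume s: "s \<in> {1..K}"
    have h: "lo c \<le> c s" "c s \<le> hi c" using lohi[OF s, of c] by auto
    have "\<bar>c s - hi c\<bar> \<le> \<bar>c s - y\<bar>" using h assms by arith
    then show "w s * \<bar>c s - hi c\<bar> powr q \<le> w s * \<bar>c s - y\<bar> powr q"
      using q w by (intro mult_left_mono powr_mono2) auto
  qed
  obtain s where s: "s \<in> {1..K}" "w s > 0" using wpos by auto
  have "\<bar>c s - hi c\<bar> powr q < \<bar>c s - y\<bar> powr q"
    using assms lohi[OF s(1), of c] q by (intro powr_less_mono2) auto
  then show "\<exists>s\<in>{1..K}. w s * \<bar>c s - hi c\<bar> powr q < w s * \<bar>c s - y\<bar> powr q"
    using s by (intro bexI[of _ s]) auto
qed simp

lemma Phi_below: assumes "y < lo c" shows "Phi w K q c y > Phi w K q c (lo c)"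
  unfolding Phi_def
proof (rule sum_strict_mono_ex1)
  show "\<forall>s\<in>{1..K}. w s * \<bar>c s - lo c\<bar> powr q \<le> w s * \<bar>c s - y\<bar> powr q"
  proof
    fix s assume s: "s \<in> {1..K}"
    have h: "lo c \<le> c s" "c s \<le> hi c" using lohi[OF s, of c] by auto
    have "\<bar>c s - lo c\<bar> \<le> \<bar>c s - y\<bar>" using h assms by arith
    then show "w s * \<bar>c s - lo c\<bar> powr q \<le> w s * \<bar>c s - y\<bar> powr q"
      using q w by (intro mult_left_mono powr_mono2) auto
  qed
  obtain s where s: "s \<in> {1..K}" "w s > 0" using wpos by auto
  have "\<bar>c s - lo c\<bar> powr q < \<bar>c s - y\<bar> powr q"
    using assms lohi[OF s(1), of c] q by (intro powr_less_mono2) auto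
  then show "\<exists>s\<in>{1..K}. w s * \<bar>c s - lo c\<bar> powr q < w s * \<bar>c s - y\<bar> powr q"
    using s by (intro bexI[of _ s]) auto
qed simp

lemma lam_props:
  shows "\<forall>z. Phi w K q c (lam w K q c) \<le> Phi w K q c z" "lo c \<le> lam w K q c" "lam w K q c \<le> hi c"
    "\<And>y. \<forall>z. Phi w K q c y \<le> Phi w K q c z \<Longrightarrow> lam w K q c \<le> y"
proof -
  have cont: "continuous_on S (Phi w K q c)" for S using Phi_cont q by simp
  have "\<exists>x\<in>{lo c..hi c}. \<forall>y\<in>{lo c..hi c}. Phi w K q c x \<le> Phi w K q c y"
    by (rule continuous_attains_inf[OF compact_Icc _ cont]) (use lo_le_hi[of c] in auto)
  then obtain y0 where y0: "y0 \<in> {lo c..hi c}" "\<forall>y\<in>{lo c..hi c}. Phi w K q c y0 \<le> Phi w K q c y"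
    by blast
  have glob: "Phi w K q c y0 \<le> Phi w K q c y" for y
  proof (cases "y > hi c")
    case True
    have "hi c \<in> {lo c..hi c}" using lo_le_hi[of c] by simp
    then have "Phi w K q c y0 \<le> Phi w K q c (hi c)" using y0(2) by blast
    then show ?thesis using Phi_above[OF True] by linarith
  next
    case False
    show ?thesis
    proof (cases "y < lo c")
      case True
      have "lo c \<in> {lo c..hi c}" using lo_le_hi[of c] by simp
      then have "Phi w K q c y0 \<le> Phi w K q c (lo c)" using y0(2) by blast
      then show ?thesis using Phi_below[OF True] by linarith
    next
      case False
      then have "y \<in> {lo c..hi c}" using \<open>\<not> y > hi c\<close> by simp
      then show ?thesis using y0(2) by blast
    qed
  qed
  define A where "A = {y. \<forall>z. Phi w K q c y \<le> Phi w K q c z}"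
  have A_eq: "A = {y. Phi w K q c y \<le> Phi w K q c y0}"
    using glob by (auto simp: A_def intro: order_trans)
  have "closed A" unfolding A_eq by (intro closed_Collect_le cont continuous_on_const)
  moreover have "y0 \<in> A" unfolding A_eq by simp
  moreover have Alo: "\<forall>y\<in>A. lo c \<le> y"
  proof
    fix y assume "y \<in> A"
    show "lo c \<le> y"
    proof (rule ccontr)
      assume "\<not> lo c \<le> y"
      then have "Phi w K q c y > Phi w K q c (lo c)" using Phi_below by simp
      with \<open>y \<in> A\<close> show False by (auto simp: A_def dest: spec[of _ "lo c"])
    qed
  qed
  ultimately have IA: "Inf A \<in> A" using closed_contains_Inf[of A] by (auto simp: bdd_below_def)
  have IA2: "Inf A \<le> y0" using \<open>y0 \<in> A\<close> Alo by (intro cInf_lower) (auto simp: bdd_below_def)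
  have IA3: "lo c \<le> Inf A" using \<open>y0 \<in> A\<close> Alo by (intro cInf_greatest) auto
  have lamA: "lam w K q c = Inf A" by (simp add: lam_def A_def)
  have low: "Inf A \<le> y" if "y \<in> A" for y using that Alo by (intro cInf_lower) (auto simp: bdd_below_def)
  show "lam w K q c \<le> y" if "\<forall>z. Phi w K q c y \<le> Phi w K q c z" for y
    using that low[of y] unfolding lamA A_def by auto
  show "\<forall>z. Phi w K q c (lam w K q c) \<le> Phi w K q c z" using IA unfolding lamA A_def by auto
  show "lo c \<le> lam w K q c" using IA3 lamA by simp
  show "lam w K q c \<le> hi c" using IA2 lamA y0(1) by simp
qed

lemma SM:
  fixes a b x1 x2 :: real
  assumes "a \<le> x1" "x1 \<le> b" "a \<le> x2" "x2 \<le> b" "x1 + x2 = a + b"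
  shows "\<bar>x1\<bar> powr q + \<bar>x2\<bar> powr q \<le> \<bar>a\<bar> powr q + \<bar>b\<bar> powr q"
proof (cases "a = b")
  case True
  then have "x1 = a" "x2 = a" using assms by auto
  then show ?thesis using True by simp
next
  case False
  then have ab: "b - a > 0" using assms by simp
  define t where "t = (x1 - a) / (b - a)"
  have t: "0 \<le> t" "t \<le> 1" using assms ab by (auto simp: t_def field_simps)
  have tt: "t * (b - a) = x1 - a" using ab by (simp add: t_def)
  have e1: "(1 - t) * a + t * b = a + t * (b - a)" by (simp add: algebra_simps)
  have e2: "(1 - (1 - t)) * a + (1 - t) * b = b - t * (b - a)" by (simp add: algebra_simps)
  have x1: "x1 = (1 - t) * a + t * b" unfolding e1 tt by simp
  have x2: "x2 = (1 - (1 - t)) * a + (1 - t) * b" unfolding e2 tt using assms(5) by simp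
  have "\<bar>x1\<bar> powr q \<le> (1 - t) * \<bar>a\<bar> powr q + t * \<bar>b\<bar> powr q"
    unfolding x1 by (rule CV[OF q t])
  moreover have "\<bar>x2\<bar> powr q \<le> (1 - (1 - t)) * \<bar>a\<bar> powr q + (1 - t) * \<bar>b\<bar> powr q"
    unfolding x2 using t by (intro CV[OF q]) auto
  ultimately show ?thesis by (simp add: algebra_simps)
qed

lemma lam_mono:
  assumes cc: "\<And>s. s \<in> {1..K} \<Longrightarrow> c s \<le> c' s"
  shows "lam w K q c \<le> lam w K q c'"
proof (rule ccontr)
  define y where "y = lam w K q c"
  define y' where "y' = lam w K q c'"
  assume "\<not> lam w K q c \<le> lam w K q c'"
  then have yy: "y' < y" by (simp add: y_def y'_def)
  have "\<not> (\<forall>z. Phi w K q c y' \<le> Phi w K q c z)"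
    using lam_props(4)[of c y'] yy by (auto simp: y_def)
  then obtain z where z: "Phi w K q c z < Phi w K q c y'" by (auto simp: not_le)
  have "Phi w K q c y \<le> Phi w K q c z" using lam_props(1)[of c] by (simp add: y_def)
  with z have s1: "Phi w K q c y < Phi w K q c y'" by simp
  have s2: "Phi w K q c' y' \<le> Phi w K q c' y" using lam_props(1)[of c'] by (simp add: y'_def)
  have "Phi w K q c y' + Phi w K q c' y \<le> Phi w K q c y + Phi w K q c' y'"
    unfolding Phi_def sum.distrib[symmetric]
  proof (rule sum_mono)
    fix s assume s: "s \<in> {1..K}"
    have "\<bar>c s - y'\<bar> powr q + \<bar>c' s - y\<bar> powr q \<le> \<bar>c s - y\<bar> powr q + \<bar>c' s - y'\<bar> powr q"
      using cc[OF s] yy by (intro SM) auto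
    then show "w s * \<bar>c s - y'\<bar> powr q + w s * \<bar>c' s - y\<bar> powr q \<le> w s * \<bar>c s - y\<bar> powr q + w s * \<bar>c' s - y'\<bar> powr q"
      using w[of s] by (simp add: distrib_left[symmetric] mult_left_mono)
  qed
  with s1 s2 show False by simp
qed

lemma lam_bound: "\<bar>lam w K q c\<bar> powr q \<le> (\<Sum>s\<in>{1..K}. \<bar>c s\<bar> powr q)"
proof -
  have ne: "c ` {1..K} \<noteq> {}" using K by auto
  obtain s1 where s1: "s1 \<in> {1..K}" "c s1 = lo c" using Min_in[OF _ ne] by auto
  obtain s2 where s2: "s2 \<in> {1..K}" "c s2 = hi c" using Max_in[OF _ ne] by auto
  have "\<exists>s\<in>{1..K}. \<bar>lam w K q c\<bar> \<le> \<bar>c s\<bar>"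
  proof (cases "lam w K q c \<ge> 0")
    case True
    have "lam w K q c \<le> c s2" using lam_props(3)[of c] s2(2) by simp
    then have "\<bar>lam w K q c\<bar> \<le> \<bar>c s2\<bar>" using True by arith
    then show ?thesis using s2(1) by blast
  next
    case False
    have "c s1 \<le> lam w K q c" using lam_props(2)[of c] s1(2) by simp
    then have "\<bar>lam w K q c\<bar> \<le> \<bar>c s1\<bar>" using False by arith
    then show ?thesis using s1(1) by blast
  qed
  then obtain s where s: "s \<in> {1..K}" "\<bar>lam w K q c\<bar> \<le> \<bar>c s\<bar>" by blast
  have "\<bar>lam w K q c\<bar> powr q \<le> \<bar>c s\<bar> powr q" using s q by (intro powr_mono2) auto
  also have "\<dots> \<le> (\<Sum>s\<in>{1..K}. \<bar>c s\<bar> powr q)"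
    using s by (intro member_le_sum) auto
  finally show ?thesis .
qed

end

lemma arith_tri:
  fixes q D V R :: real
  assumes q: "q \<ge> 1" and D: "D \<ge> 0" and V: "V \<ge> 0" and R: "R \<ge> 0"
    and H: "\<And>a b. a > 0 \<Longrightarrow> b > 0 \<Longrightarrow> V \<le> a powr q \<Longrightarrow> R \<le> b powr q \<Longrightarrow> D \<le> (a + b) powr q"
  shows "D powr (1 / q) \<le> V powr (1 / q) + R powr (1 / q)"
proof (rule ccontr)
  assume neg: "\<not> ?thesis"
  define e where "e = (D powr (1 / q) - V powr (1 / q) - R powr (1 / q)) / 3"
  have e: "e > 0" using neg by (simp add: e_def)
  define a where "a = V powr (1 / q) + e"
  define b where "b = R powr (1 / q) + e"
  have ab: "a > 0" "b > 0" using e by (auto simp: a_def b_def add_nonneg_pos)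
  have pp: "(x powr (1 / q)) powr q = x" if "x \<ge> 0" for x
    using that q by (simp add: powr_powr)
  have "V \<le> a powr q"
  proof -
    have "(V powr (1 / q)) powr q \<le> a powr q" using e q by (intro powr_mono2) (auto simp: a_def)
    then show ?thesis using pp[OF V] by simp
  qed
  moreover have "R \<le> b powr q"
  proof -
    have "(R powr (1 / q)) powr q \<le> b powr q" using e q by (intro powr_mono2) (auto simp: b_def)
    then show ?thesis using pp[OF R] by simp
  qed
  ultimately have "D \<le> (a + b) powr q" using H ab by simp
  moreover have "(a + b) powr q < (D powr (1 / q)) powr q"
  proof (rule powr_less_mono2)
    show "0 < q" using q by simp
    show "0 \<le> a + b" using ab by simp
    have "D powr (1 / q) = V powr (1 / q) + R powr (1 / q) + 3 * e" by (simp add: e_def field_simps)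
    then show "a + b < D powr (1 / q)" using e unfolding a_def b_def by linarith
  qed
  ultimately show False using pp[OF D] by simp
qed

lemma W_le_pair:
  assumes f: "f \<in> borel_measurable Nn" and g: "g \<in> borel_measurable Nn" and Nn: "prob_space Nn"
    and "distr Nn borel f = \<mu>" "distr Nn borel g = \<nu>"
  shows "Wq_pow q \<mu> \<nu> \<le> (\<integral>\<^sup>+ u. ennreal (\<bar>f u - g u\<bar> powr q) \<partial>Nn)"
proof -
  have m: "(\<lambda>u. (f u, g u)) \<in> measurable Nn (borel \<Otimes>\<^sub>M borel)"
    using f g by (rule measurable_Pair)
  have h: "(\<lambda>z::real\<times>real. ennreal (\<bar>fst z - snd z\<bar> powr q)) \<in> borel_measurable (borel \<Otimes>\<^sub>M borel)"
    by measurable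
  have "(\<integral>\<^sup>+ z. ennreal (\<bar>fst z - snd z\<bar> powr q) \<partial>distr Nn (borel \<Otimes>\<^sub>M borel) (\<lambda>u. (f u, g u)))
      = (\<integral>\<^sup>+ u. ennreal (\<bar>f u - g u\<bar> powr q) \<partial>Nn)"
  proof -
    have h': "(\<lambda>z::real\<times>real. ennreal (\<bar>fst z - snd z\<bar> powr q)) \<in> borel_measurable (distr Nn (borel \<Otimes>\<^sub>M borel) (\<lambda>u. (f u, g u)))"
      using h by simp
    show ?thesis using nn_integral_distr[OF m h'] by simp
  qed
  moreover have "Wq_pow q \<mu> \<nu> \<le> (\<integral>\<^sup>+ z. ennreal (\<bar>fst z - snd z\<bar> powr q) \<partial>distr Nn (borel \<Otimes>\<^sub>M borel) (\<lambda>u. (f u, g u)))"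
    unfolding Wq_pow_def by (rule INF_lower) (rule coupling_pair[OF assms])
  ultimately show ?thesis by simp
qed

lemma Pq_rd: "\<nu> \<in> Pq q \<Longrightarrow> real_distribution \<nu>"
  by (auto simp: Pq_def real_distribution_def real_distribution_axioms_def)

lemma fin_pow:
  fixes X :: ennreal and q :: real
  assumes "X < \<infinity>" "q > 0"
  shows "\<exists>a>0. X \<le> ennreal (a powr q)"
proof -
  define a where "a = (enn2real X + 1) powr (1 / q)"
  have pos: "enn2real X + 1 > 0" using enn2real_nonneg[of X] by linarith
  have a: "a > 0" using pos by (simp add: a_def)
  have "a powr q = enn2real X + 1" using assms(2) by (simp add: a_def powr_powr)
  moreover have "X = ennreal (enn2real X)" using assms(1) by simp
  ultimately have "X \<le> ennreal (a powr q)" by (metis ennreal_leI enn2real_nonneg le_add_same_cancel1 zero_le_one)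
  then show ?thesis using a by blast
qed

lemma sumE: "(\<And>s. s \<in> I \<Longrightarrow> w s \<ge> 0) \<Longrightarrow> (\<And>s. s \<in> I \<Longrightarrow> a s \<ge> 0) \<Longrightarrow>
  (\<Sum>s\<in>I. ennreal (w s) * ennreal (a s)) = ennreal (\<Sum>s\<in>I. w s * a s)"
  by (subst sum_ennreal[symmetric]) (auto simp: ennreal_mult intro!: sum.cong mult_nonneg_nonneg)

lemma SI:
  assumes "\<And>s. s \<in> I \<Longrightarrow> F s \<in> borel_measurable L" "finite I"
  shows "(\<Sum>s\<in>I. ennreal (w s) * (\<integral>\<^sup>+ u. F s u \<partial>L)) = (\<integral>\<^sup>+ u. (\<Sum>s\<in>I. ennreal (w s) * F s u) \<partial>L)"
proof -
  have "(\<integral>\<^sup>+ u. (\<Sum>s\<in>I. ennreal (w s) * F s u) \<partial>L) = (\<Sum>s\<in>I. (\<integral>\<^sup>+ u. ennreal (w s) * F s u \<partial>L))"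
    using assms by (intro nn_integral_sum) auto
  also have "\<dots> = (\<Sum>s\<in>I. ennreal (w s) * (\<integral>\<^sup>+ u. F s u \<partial>L))"
    using assms by (intro sum.cong refl nn_integral_cmult) auto
  finally show ?thesis by simp
qed

lemma root_pow: "q > 0 \<Longrightarrow> x \<ge> 0 \<Longrightarrow> (x powr (1 / q)) powr q = (x :: real)"
  by (simp add: powr_powr)

lemma pow_mono_iff: "q > 0 \<Longrightarrow> x \<ge> 0 \<Longrightarrow> y \<ge> 0 \<Longrightarrow> x powr q \<le> y powr q \<longleftrightarrow> x \<le> (y :: real)"
  using powr_mono2[of q x y] powr_less_mono2[of q y x] by (auto simp: not_le[symmetric])

lemma final_arith1:
  fixes q D V t :: real
  assumes q: "q \<ge> 1" and D: "D \<ge> 0" and V: "V \<ge> 0" and t: "0 \<le> t" "t \<le> 1"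
    and h: "D powr (1 / q) \<le> V powr (1 / q) + ((1 - t) powr q * D) powr (1 / q)"
  shows "t powr q * D \<le> V"
proof -
  have q0: "q > 0" using q by simp
  have e: "((1 - t) powr q * D) powr (1 / q) = (1 - t) * D powr (1 / q)"
    using t q0 D by (simp add: powr_mult powr_powr)
  have "t * D powr (1 / q) \<le> V powr (1 / q)" using h unfolding e by (simp add: algebra_simps)
  then have "(t * D powr (1 / q)) powr q \<le> (V powr (1 / q)) powr q"
    using t q0 by (intro powr_mono2) auto
  then show ?thesis using root_pow[OF q0 V] root_pow[OF q0 D] t by (simp add: powr_mult)
qed

lemma final_arith2:
  fixes q D R t c :: real
  assumes q: "q \<ge> 1" and D: "D \<ge> 0" and R: "R \<ge> 0" and t: "0 \<le> t" "t \<le> 1"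
    and c: "c = D powr (1 / q) - R powr (1 / q)"
    and h: "c > 0 \<Longrightarrow> c powr q \<le> t powr q * D"
  shows "(1 - t) powr q * D \<le> R"
proof -
  have q0: "q > 0" using q by simp
  have key: "(1 - t) * D powr (1 / q) \<le> R powr (1 / q)"
  proof (cases "c > 0")
    case False
    then have "D powr (1 / q) \<le> R powr (1 / q)" using c by simp
    moreover have "(1 - t) * D powr (1 / q) \<le> D powr (1 / q)" using t by (simp add: mult_left_le_one_le)
    ultimately show ?thesis by simp
  next
    case True
    have "t powr q * D = (t * D powr (1 / q)) powr q"
      using t root_pow[OF q0 D] by (simp add: powr_mult)
    then have "c powr q \<le> (t * D powr (1 / q)) powr q" using h[OF True] by simp
    then have "c \<le> t * D powr (1 / q)" using pow_mono_iff[OF q0] True t by simp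
    then show ?thesis using c by (simp add: algebra_simps)
  qed
  then have "((1 - t) * D powr (1 / q)) powr q \<le> (R powr (1 / q)) powr q"
    using t q0 by (intro powr_mono2) auto
  then show ?thesis using root_pow[OF q0 R] root_pow[OF q0 D] t by (simp add: powr_mult)
qed

locale thm_setup = wsetup w K q for w K q +
  fixes M :: "'a measure" and N :: "'x measure" and X :: "'a \<Rightarrow> 'x" and S :: "'a \<Rightarrow> nat"
    and fstar :: "'x \<Rightarrow> nat \<Rightarrow> real"
  assumes M: "prob_space M" and Xm: "X \<in> measurable M N"
    and Sm: "S \<in> measurable M (count_space UNIV)" and Srange: "\<forall>\<omega>\<in>space M. S \<omega> \<in> {1..K}"
    and Spos: "\<forall>s\<in>{1..K}. measure M {\<omega> \<in> space M. S \<omega> = s} > 0"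
    and fm: "\<forall>s\<in>{1..K}. (\<lambda>x. fstar x s) \<in> borel_measurable N"
    and natom: "\<forall>s\<in>{1..K}. \<forall>x. measure (cond_law M X S fstar s) {x} = 0"
    and mom: "\<forall>s\<in>{1..K}. (\<integral>\<^sup>+ x. ennreal (\<bar>x\<bar> powr q) \<partial>cond_law M X S fstar s) < \<infinity>"
begin

abbreviation "CM s \<equiv> cond_meas M S s"

lemma CM_sets[simp, measurable_cong]: "sets (CM s) = sets M"
  by (simp add: cond_meas_def)

lemma CM_space[simp]: "space (CM s) = space M"
  by (simp add: cond_meas_def)

lemma Sset[measurable]: "{\<omega> \<in> space M. S \<omega> = s} \<in> sets M"
proof -
  have "{\<omega> \<in> space M. S \<omega> = s} = S -` {s} \<inter> space M" by auto
  then show ?thesis using measurable_sets[OF Sm, of "{s}"] by simp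
qed

lemma CM_prob: assumes s: "s \<in> {1..K}" shows "prob_space (CM s)"
proof -
  interpret prob_space M by (rule M)
  have "emeasure M {\<omega> \<in> space M. S \<omega> = s} = ennreal (measure M {\<omega> \<in> space M. S \<omega> = s})"
    by (simp add: emeasure_eq_measure)
  moreover have "measure M {\<omega> \<in> space M. S \<omega> = s} > 0" using Spos s by auto
  ultimately show ?thesis unfolding cond_meas_def
    by (intro prob_space_uniform_measure) auto
qed

lemma CM_AE: assumes s: "s \<in> {1..K}" shows "AE \<omega> in CM s. S \<omega> = s"
  unfolding cond_meas_def by (rule AE_uniform_measureI) (auto intro!: AE_I2)

lemma S_meas_K: "S \<in> measurable M (count_space {1..K})"
  unfolding measurable_count_space_eq2_countable
proof
  show "S \<in> space M \<rightarrow> {1..K}" using Srange by auto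
  show "\<forall>a\<in>{1..K}. S -` {a} \<inter> space M \<in> sets M"
    using measurable_sets[OF Sm] by auto
qed

lemma comp_meas:
  assumes "\<forall>s\<in>{1..K}. (\<lambda>x. f x s) \<in> borel_measurable N"
  shows "(\<lambda>\<omega>. f (X \<omega>) (S \<omega>)) \<in> borel_measurable M"
proof -
  have "(\<lambda>\<omega>. (\<lambda>s \<omega>. f (X \<omega>) s) (S \<omega>) \<omega>) \<in> borel_measurable M"
  proof (rule measurable_compose_countable'[OF _ S_meas_K])
    fix s assume "s \<in> {1..K}"
    then have "(\<lambda>x. f x s) \<in> borel_measurable N" using assms by auto
    then show "(\<lambda>\<omega>. f (X \<omega>) s) \<in> borel_measurable M"
      by (rule measurable_compose[OF Xm])
  qed simp
  then show ?thesis by simp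
qed

lemma comp_meas_s:
  assumes "s \<in> {1..K}" "\<forall>s\<in>{1..K}. (\<lambda>x. f x s) \<in> borel_measurable N"
  shows "(\<lambda>\<omega>. f (X \<omega>) s) \<in> borel_measurable M"
proof -
  have "(\<lambda>x. f x s) \<in> borel_measurable N" using assms by auto
  then show ?thesis by (rule measurable_compose[OF Xm])
qed

lemma law_eq:
  assumes s: "s \<in> {1..K}" and f: "\<forall>s\<in>{1..K}. (\<lambda>x. f x s) \<in> borel_measurable N"
  shows "cond_law M X S f s = distr (CM s) borel (\<lambda>\<omega>. f (X \<omega>) s)"
  unfolding cond_law_def
proof (rule distr_cong_AE)
  show "AE \<omega> in CM s. f (X \<omega>) (S \<omega>) = f (X \<omega>) s" using CM_AE[OF s] by eventually_elim simp
  show "(\<lambda>\<omega>. f (X \<omega>) (S \<omega>)) \<in> borel_measurable (CM s)"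
    unfolding measurable_cong_sets[OF CM_sets refl] using comp_meas[OF f] .
  show "(\<lambda>\<omega>. f (X \<omega>) s) \<in> borel_measurable (CM s)"
    unfolding measurable_cong_sets[OF CM_sets refl] using comp_meas_s[OF s f] .
qed simp_all

lemma law_rd:
  assumes s: "s \<in> {1..K}" and f: "\<forall>s\<in>{1..K}. (\<lambda>x. f x s) \<in> borel_measurable N"
  shows "real_distribution (cond_law M X S f s)"
proof -
  interpret prob_space "CM s" by (rule CM_prob[OF s])
  have "(\<lambda>\<omega>. f (X \<omega>) (S \<omega>)) \<in> borel_measurable (CM s)"
    unfolding measurable_cong_sets[OF CM_sets refl] using comp_meas[OF f] .
  then show ?thesis unfolding cond_law_def by (rule real_distribution_distr)
qed


abbreviation "mu s \<equiv> cond_law M X S fstar s"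

lemma mu_rd: "s \<in> {1..K} \<Longrightarrow> real_distribution (mu s)"
  using law_rd fm by blast

lemma mu_eq: "s \<in> {1..K} \<Longrightarrow> mu s = distr (CM s) borel (\<lambda>\<omega>. fstar (X \<omega>) s)"
  using law_eq fm by blast

lemma fstar_s_meas: "s \<in> {1..K} \<Longrightarrow> (\<lambda>\<omega>. fstar (X \<omega>) s) \<in> borel_measurable (CM s)"
  unfolding measurable_cong_sets[OF CM_sets refl] using comp_meas_s fm by blast

lemma FQ: "s \<in> {1..K} \<Longrightarrow> u \<in> {0<..<1} \<Longrightarrow> cdf (mu s) (quantile (mu s) u) = u"
  using F_Q[OF mu_rd] natom by auto

lemma transfer_nn:
  assumes s: "s \<in> {1..K}" and H: "H \<in> borel_measurable borel"
  shows "(\<integral>\<^sup>+ \<omega>. H (fstar (X \<omega>) s) \<partial>CM s) = (\<integral>\<^sup>+ u. H (quantile (mu s) u) \<partial>Lu)"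
proof -
  have "(\<integral>\<^sup>+ x. H x \<partial>distr (CM s) borel (\<lambda>\<omega>. fstar (X \<omega>) s)) = (\<integral>\<^sup>+ \<omega>. H (fstar (X \<omega>) s) \<partial>CM s)"
    by (rule nn_integral_distr[OF fstar_s_meas[OF s]]) (simp add: H)
  then have "(\<integral>\<^sup>+ \<omega>. H (fstar (X \<omega>) s) \<partial>CM s) = (\<integral>\<^sup>+ x. H x \<partial>mu s)"
    unfolding mu_eq[OF s] by simp
  also have "\<dots> = (\<integral>\<^sup>+ x. H x \<partial>distr Lu borel (quantile (mu s)))"
    using distr_Q[OF mu_rd[OF s]] by simp
  also have "\<dots> = (\<integral>\<^sup>+ u. H (quantile (mu s) u) \<partial>Lu)"
    by (rule nn_integral_distr[OF Q_meas[OF mu_rd[OF s]]]) (simp add: H)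
  finally show ?thesis .
qed

lemma transfer_distr:
  assumes s: "s \<in> {1..K}" and G: "G \<in> borel_measurable borel"
  shows "distr (CM s) borel (\<lambda>\<omega>. G (fstar (X \<omega>) s)) = distr Lu borel (\<lambda>u. G (quantile (mu s) u))"
proof -
  have "distr (CM s) borel (\<lambda>\<omega>. G (fstar (X \<omega>) s)) = distr (mu s) borel G"
    unfolding mu_eq[OF s] by (subst distr_distr[OF G fstar_s_meas[OF s]]) (simp add: comp_def)
  also have "\<dots> = distr (distr Lu borel (quantile (mu s))) borel G"
    using distr_Q[OF mu_rd[OF s]] by simp
  also have "\<dots> = distr Lu borel (\<lambda>u. G (quantile (mu s) u))"
    by (subst distr_distr[OF G Q_meas[OF mu_rd[OF s]]]) (simp add: comp_def)
  finally show ?thesis .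
qed

lemma lam_cong: "(\<And>s. s \<in> {1..K} \<Longrightarrow> c s = c' s) \<Longrightarrow> lam w K q c = lam w K q c'"
proof -
  assume h: "\<And>s. s \<in> {1..K} \<Longrightarrow> c s = c' s"
  have "Phi w K q c = Phi w K q c'" unfolding Phi_def using h by (intro ext sum.cong) auto
  then show ?thesis unfolding lam_def by simp
qed

definition B0 :: "real \<Rightarrow> real" where
  "B0 u = lam w K q (\<lambda>s'. quantile (cond_law M X S fstar s') u)"

lemma B0_mono: "mono_on {0<..<1} B0"
  unfolding mono_on_def B0_def
proof (intro allI impI lam_mono)
  fix u v :: real and s :: nat assume uv: "u \<in> {0<..<1} \<and> v \<in> {0<..<1} \<and> u \<le> v" and s: "s \<in> {1..K}"
  show "quantile (mu s) u \<le> quantile (mu s) v" using uv by (intro Q_mono[OF mu_rd[OF s]]) auto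
qed

lemma Q_low: "real_distribution \<mu> \<Longrightarrow> u \<le> 0 \<Longrightarrow> quantile \<mu> u = quantile \<mu> 0"
proof -
  assume rd: "real_distribution \<mu>" and u: "u \<le> 0"
  have nn: "0 \<le> cdf \<mu> x" for x
    using finite_borel_measure.cdf_nonneg[OF real_distribution.finite_borel_measure_M[OF rd]] .
  have "{x. u \<le> cdf \<mu> x} = UNIV" "{x. 0 \<le> cdf \<mu> x} = UNIV"
    using nn u by (auto intro: order_trans)
  then show ?thesis unfolding quantile_def by simp
qed

lemma Q_high: "real_distribution \<mu> \<Longrightarrow> u > 1 \<Longrightarrow> quantile \<mu> u = quantile \<mu> 2"
proof -
  assume rd: "real_distribution \<mu>" and u: "u > 1"
  have "{x. u \<le> cdf \<mu> x} = {}" "{x. 2 \<le> cdf \<mu> x} = {}"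
    using real_distribution.cdf_bounded_prob[OF rd] u by (auto dest: order_trans[of _ _ 1])
  then show ?thesis unfolding quantile_def by simp
qed

lemma B0_piece: "B0 u = (if u \<in> {0<..<1} then B0 u else if u \<le> 0 then B0 0 else if u = 1 then B0 1 else B0 2)"
proof -
  have "u \<le> 0 \<Longrightarrow> B0 u = B0 0" unfolding B0_def
    by (intro lam_cong Q_low mu_rd)
  moreover have "u > 1 \<Longrightarrow> B0 u = B0 2" unfolding B0_def
    by (intro lam_cong Q_high mu_rd)
  moreover have "\<not> u \<in> {0<..<1} \<Longrightarrow> \<not> u \<le> 0 \<Longrightarrow> u \<noteq> 1 \<Longrightarrow> u > 1" by auto
  ultimately show ?thesis by auto
qed

lemma B0_meas[measurable]: "B0 \<in> borel_measurable borel"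
proof -
  have m1: "B0 \<in> borel_measurable (restrict_space borel {u. u \<in> {0<..<1}})"
  proof -
    have eq: "{u. u \<in> {0<..<1::real}} = {0<..<1}" by auto
    show ?thesis unfolding eq by (rule borel_measurable_mono_on_fnc[OF B0_mono])
  qed
  have "(\<lambda>u::real. if u \<le> 0 then B0 0 else if u = 1 then B0 1 else B0 2) \<in> borel_measurable borel"
    by measurable
  then have m2: "(\<lambda>u::real. if u \<le> 0 then B0 0 else if u = 1 then B0 1 else B0 2) \<in> borel_measurable (restrict_space borel {u. u \<notin> {0<..<1}})"
    by (rule measurable_restrict_space1)
  have "(\<lambda>u. if u \<in> {0<..<1} then B0 u else if u \<le> 0 then B0 0 else if u = 1 then B0 1 else B0 2) \<in> borel_measurable borel"
    by (subst measurable_If_restrict_space_iff) (use m1 m2 in auto)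
  then show ?thesis using B0_piece[symmetric] by simp
qed


definition mfun :: "'x \<Rightarrow> nat \<Rightarrow> real" where
  "mfun x s = B0 (cdf (mu s) (fstar x s))"

definition Dq :: ennreal where
  "Dq = (\<Sum>s\<in>{1..K}. ennreal (w s) * (\<integral>\<^sup>+ u. ennreal (\<bar>quantile (mu s) u - B0 u\<bar> powr q) \<partial>Lu))"

definition nubar :: "real measure" where "nubar = distr Lu borel B0"

lemma cdf_meas[measurable]: "s \<in> {1..K} \<Longrightarrow> cdf (mu s) \<in> borel_measurable borel"
  using finite_borel_measure.cdf_nondecreasing[OF real_distribution.finite_borel_measure_M[OF mu_rd]]
  by (intro borel_measurable_mono) (auto simp: mono_def)

lemma mfun_meas: "\<forall>s\<in>{1..K}. (\<lambda>x. mfun x s) \<in> borel_measurable N"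
proof
  fix s assume s: "s \<in> {1..K}"
  have "(\<lambda>x. fstar x s) \<in> borel_measurable N" using fm s by auto
  then have "(\<lambda>x. cdf (mu s) (fstar x s)) \<in> borel_measurable N"
    using cdf_meas[OF s] by (rule measurable_compose)
  then show "(\<lambda>x. mfun x s) \<in> borel_measurable N" unfolding mfun_def
    using B0_meas by (rule measurable_compose)
qed

lemma mfun_argmin:
  "is_arg_min (\<lambda>y. \<Sum>s'\<in>{1..K}. w s' * \<bar>quantile (mu s') (cdf (mu s) (fstar x s)) - y\<bar> powr q)
     (\<lambda>_. True) (mfun x s)"
  using lam_props(1)[of "\<lambda>s'. quantile (mu s') (cdf (mu s) (fstar x s))"]
  unfolding is_arg_min_def mfun_def B0_def Phi_def by (auto simp: not_less)

lemma QL: "s \<in> {1..K} \<Longrightarrow> H \<in> borel_measurable borel \<Longrightarrow>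
    (\<integral>\<^sup>+ u. H (quantile (mu s) u) \<partial>Lu) = (\<integral>\<^sup>+ x. H x \<partial>mu s)"
proof -
  assume s: "s \<in> {1..K}" and H: "H \<in> borel_measurable borel"
  have H': "H \<in> borel_measurable (distr Lu borel (quantile (mu s)))" using H by simp
  show ?thesis using nn_integral_distr[OF Q_meas[OF mu_rd[OF s]] H'] distr_Q[OF mu_rd[OF s]] by simp
qed

lemma nubar_Pq: "nubar \<in> Pq q"
proof -
  interpret L: prob_space Lu by (rule prob_space_Lu)
  have "(\<integral>\<^sup>+ x. ennreal (\<bar>x\<bar> powr q) \<partial>nubar) = (\<integral>\<^sup>+ u. ennreal (\<bar>B0 u\<bar> powr q) \<partial>Lu)"
    unfolding nubar_def by (rule nn_integral_distr) (auto intro: measurable_restrict_space1 simp: Lu_def)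
  also have "\<dots> \<le> (\<integral>\<^sup>+ u. (\<Sum>s\<in>{1..K}. ennreal (\<bar>quantile (mu s) u\<bar> powr q)) \<partial>Lu)"
  proof (rule nn_integral_mono)
    fix u
    show "ennreal (\<bar>B0 u\<bar> powr q) \<le> (\<Sum>s\<in>{1..K}. ennreal (\<bar>quantile (mu s) u\<bar> powr q))"
      using lam_bound[of "\<lambda>s'. quantile (mu s') u"] unfolding B0_def by (simp add: ennreal_leI)
  qed
  also have "\<dots> = (\<Sum>s\<in>{1..K}. (\<integral>\<^sup>+ u. ennreal (\<bar>quantile (mu s) u\<bar> powr q) \<partial>Lu))"
  proof (rule nn_integral_sum)
    fix s assume s: "s \<in> {1..K}"
    note Qm[measurable] = Q_meas[OF mu_rd[OF s]]
    show "(\<lambda>u. ennreal (\<bar>quantile (mu s) u\<bar> powr q)) \<in> borel_measurable Lu" by measurable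
  qed
  also have "\<dots> = (\<Sum>s\<in>{1..K}. (\<integral>\<^sup>+ x. ennreal (\<bar>x\<bar> powr q) \<partial>mu s))"
    by (intro sum.cong refl QL) auto
  also have "\<dots> < \<infinity>" using mom by (simp add: sum_Pinfty less_top)
  finally have fin: "(\<integral>\<^sup>+ x. ennreal (\<bar>x\<bar> powr q) \<partial>nubar) < \<infinity>" .
  have "prob_space nubar" unfolding nubar_def
    by (rule L.prob_space_distr) (auto intro: measurable_restrict_space1 simp: Lu_def)
  then show ?thesis using fin by (simp add: Pq_def nubar_def)
qed


lemma B0_Lu[measurable]: "B0 \<in> borel_measurable Lu"
  unfolding Lu_def by (rule measurable_restrict_space1) simp

lemma Q_Lu: "s \<in> {1..K} \<Longrightarrow> quantile (mu s) \<in> borel_measurable Lu"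
  by (rule Q_meas[OF mu_rd])

lemma Ustar_le: "unfair_q M X S K w q fstar \<le> Dq"
  unfolding unfair_q_def
proof (rule INF_lower2[OF nubar_Pq])
  show "(\<Sum>s\<in>{1..K}. ennreal (w s) * Wq_pow q (mu s) nubar) \<le> Dq"
    unfolding Dq_def
  proof (intro sum_mono mult_left_mono)
    fix s assume s: "s \<in> {1..K}"
    show "Wq_pow q (mu s) nubar \<le> (\<integral>\<^sup>+ u. ennreal (\<bar>quantile (mu s) u - B0 u\<bar> powr q) \<partial>Lu)"
      by (rule W_le_pair[OF Q_Lu[OF s] B0_Lu prob_space_Lu distr_Q[OF mu_rd[OF s]]]) (simp add: nubar_def)
  qed simp
qed

lemma Ustar_ge: "Dq \<le> unfair_q M X S K w q fstar"
  unfolding unfair_q_def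
proof (rule INF_greatest)
  fix \<nu> assume nu: "\<nu> \<in> Pq q"
  have rd: "real_distribution \<nu>" using Pq_rd[OF nu] .
  note Qn[measurable] = Q_meas[OF rd]
  have "(\<Sum>s\<in>{1..K}. ennreal (w s) * Wq_pow q (mu s) \<nu>) =
      (\<Sum>s\<in>{1..K}. ennreal (w s) * (\<integral>\<^sup>+ u. ennreal (\<bar>quantile (mu s) u - quantile \<nu> u\<bar> powr q) \<partial>Lu))"
    by (intro sum.cong refl arg_cong2[where f="(*)"] W1D[OF q mu_rd rd]) auto
  also have "\<dots> = (\<integral>\<^sup>+ u. (\<Sum>s\<in>{1..K}. ennreal (w s) * ennreal (\<bar>quantile (mu s) u - quantile \<nu> u\<bar> powr q)) \<partial>Lu)"
  proof (rule SI)
    fix s assume s: "s \<in> {1..K}"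
    note Qm[measurable] = Q_Lu[OF s]
    show "(\<lambda>u. ennreal (\<bar>quantile (mu s) u - quantile \<nu> u\<bar> powr q)) \<in> borel_measurable Lu" by measurable
  qed simp
  also have "\<dots> \<ge> (\<integral>\<^sup>+ u. (\<Sum>s\<in>{1..K}. ennreal (w s) * ennreal (\<bar>quantile (mu s) u - B0 u\<bar> powr q)) \<partial>Lu)"
  proof (rule nn_integral_mono)
    fix u
    have "Phi w K q (\<lambda>s'. quantile (mu s') u) (B0 u) \<le> Phi w K q (\<lambda>s'. quantile (mu s') u) (quantile \<nu> u)"
      using lam_props(1)[of "\<lambda>s'. quantile (mu s') u"] unfolding B0_def by blast
    then show "(\<Sum>s\<in>{1..K}. ennreal (w s) * ennreal (\<bar>quantile (mu s) u - B0 u\<bar> powr q))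
        \<le> (\<Sum>s\<in>{1..K}. ennreal (w s) * ennreal (\<bar>quantile (mu s) u - quantile \<nu> u\<bar> powr q))"
      unfolding Phi_def using w by (simp add: sumE ennreal_leI)
  qed
  also have "(\<integral>\<^sup>+ u. (\<Sum>s\<in>{1..K}. ennreal (w s) * ennreal (\<bar>quantile (mu s) u - B0 u\<bar> powr q)) \<partial>Lu) = Dq"
    unfolding Dq_def
  proof (rule SI[symmetric])
    fix s assume s: "s \<in> {1..K}"
    note Qm[measurable] = Q_Lu[OF s]
    show "(\<lambda>u. ennreal (\<bar>quantile (mu s) u - B0 u\<bar> powr q)) \<in> borel_measurable Lu" by measurable
  qed simp
  finally show "Dq \<le> (\<Sum>s\<in>{1..K}. ennreal (w s) * Wq_pow q (mu s) \<nu>)" .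
qed

lemma Ustar_eq: "unfair_q M X S K w q fstar = Dq"
  using Ustar_le Ustar_ge by (rule antisym)


lemma Dq_fin: "Dq < \<infinity>"
proof -
  have q0: "q > 0" using q by simp
  define A where "A = (\<Sum>s\<in>{1..K}. ennreal (w s) * (\<integral>\<^sup>+ u. ennreal (\<bar>quantile (mu s) u\<bar> powr q) \<partial>Lu))"
  define B where "B = (\<Sum>s\<in>{1..K}. ennreal (w s) * (\<integral>\<^sup>+ u. ennreal (\<bar>- B0 u\<bar> powr q) \<partial>Lu))"
  have "A < \<infinity>"
  proof -
    have "(\<integral>\<^sup>+ u. ennreal (\<bar>quantile (mu s) u\<bar> powr q) \<partial>Lu) < \<infinity>" if s: "s \<in> {1..K}" for s
      using QL[OF s, of "\<lambda>x. ennreal (\<bar>x\<bar> powr q)"] mom s by simp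
    then show ?thesis unfolding A_def
      by (simp add: sum_Pinfty less_top[symmetric] ennreal_mult_eq_top_iff)
  qed
  moreover have "B < \<infinity>"
  proof -
    have "(\<integral>\<^sup>+ u. ennreal (\<bar>- B0 u\<bar> powr q) \<partial>Lu) = (\<integral>\<^sup>+ x. ennreal (\<bar>x\<bar> powr q) \<partial>nubar)"
      unfolding nubar_def by (subst nn_integral_distr) (auto simp: Lu_def intro: measurable_restrict_space1)
    also have "\<dots> < \<infinity>" using nubar_Pq by (simp add: Pq_def)
    finally show ?thesis unfolding B_def
      by (simp add: sum_Pinfty less_top[symmetric] ennreal_mult_eq_top_iff)
  qed
  ultimately obtain a b where ab: "a > 0" "A \<le> ennreal (a powr q)" "b > 0" "B \<le> ennreal (b powr q)"
    using fin_pow q0 by metis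
  have "(\<Sum>s\<in>{1..K}. ennreal (w s) * (\<integral>\<^sup>+ u. ennreal (\<bar>quantile (mu s) u + - B0 u\<bar> powr q) \<partial>Lu))
      \<le> ennreal ((a + b) powr q)"
    by (rule Mink[OF q ab(1) ab(3) _ w _ _ ab(2)[unfolded A_def] ab(4)[unfolded B_def]]) (auto intro: Q_Lu)
  then have "Dq \<le> ennreal ((a + b) powr q)" unfolding Dq_def by simp
  then show ?thesis by (rule le_less_trans) simp
qed

lemma IntS:
  assumes s: "s \<in> {1..K}" and Ps: "(\<lambda>z. Ps (fst z) (snd z)) \<in> borel_measurable (borel \<Otimes>\<^sub>M borel)"
  shows "(\<integral>\<^sup>+ \<omega>. Ps (fstar (X \<omega>) (S \<omega>)) (mfun (X \<omega>) (S \<omega>)) \<partial>CM s) =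
    (\<integral>\<^sup>+ u. Ps (quantile (mu s) u) (B0 u) \<partial>Lu)"
proof -
  define H where "H x = Ps x (B0 (cdf (mu s) x))" for x
  have Hm: "H \<in> borel_measurable borel"
  proof -
    have "(\<lambda>x. (x, B0 (cdf (mu s) x))) \<in> measurable borel (borel \<Otimes>\<^sub>M borel)"
      using cdf_meas[OF s] by measurable
    from measurable_compose[OF this Ps] have "(\<lambda>x. Ps x (B0 (cdf (mu s) x))) \<in> borel_measurable borel" by simp
    moreover have "H = (\<lambda>x. Ps x (B0 (cdf (mu s) x)))" by (simp add: H_def fun_eq_iff)
    ultimately show ?thesis by simp
  qed
  have "(\<integral>\<^sup>+ \<omega>. Ps (fstar (X \<omega>) (S \<omega>)) (mfun (X \<omega>) (S \<omega>)) \<partial>CM s) = (\<integral>\<^sup>+ \<omega>. H (fstar (X \<omega>) s) \<partial>CM s)"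
    by (rule nn_integral_cong_AE) (use CM_AE[OF s] in \<open>eventually_elim, simp add: H_def mfun_def\<close>)
  also have "\<dots> = (\<integral>\<^sup>+ u. H (quantile (mu s) u) \<partial>Lu)" by (rule transfer_nn[OF s Hm])
  also have "\<dots> = (\<integral>\<^sup>+ u. Ps (quantile (mu s) u) (B0 u) \<partial>Lu)"
    by (rule nn_integral_cong) (simp add: H_def FQ[OF s])
  finally show ?thesis .
qed

definition gfun :: "real \<Rightarrow> 'x \<Rightarrow> nat \<Rightarrow> real" where
  "gfun t x s = t * fstar x s + (1 - t) * mfun x s"

lemma gfun_meas: "\<forall>s\<in>{1..K}. (\<lambda>x. gfun t x s) \<in> borel_measurable N"
proof
  fix s assume s: "s \<in> {1..K}"
  have [measurable]: "(\<lambda>x. fstar x s) \<in> borel_measurable N" "(\<lambda>x. mfun x s) \<in> borel_measurable N"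
    using fm mfun_meas s by auto
  show "(\<lambda>x. gfun t x s) \<in> borel_measurable N" unfolding gfun_def by measurable
qed

lemma risk_g:
  assumes t: "0 \<le> t" "t \<le> 1"
  shows "risk_q M X S K w q fstar (gfun t) = ennreal ((1 - t) powr q) * Dq"
proof -
  have "(\<integral>\<^sup>+ \<omega>. ennreal (\<bar>gfun t (X \<omega>) (S \<omega>) - fstar (X \<omega>) (S \<omega>)\<bar> powr q) \<partial>CM s)
      = ennreal ((1 - t) powr q) * (\<integral>\<^sup>+ u. ennreal (\<bar>quantile (mu s) u - B0 u\<bar> powr q) \<partial>Lu)"
    if s: "s \<in> {1..K}" for s
  proof -
    define Ph where "Ph a b = ennreal (\<bar>t * a + (1 - t) * b - a\<bar> powr q)" for a b :: real
    have "(\<lambda>z. Ph (fst z) (snd z)) \<in> borel_measurable (borel \<Otimes>\<^sub>M borel)"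
      unfolding Ph_def by measurable
    from IntS[OF s this]
    have "(\<integral>\<^sup>+ \<omega>. ennreal (\<bar>gfun t (X \<omega>) (S \<omega>) - fstar (X \<omega>) (S \<omega>)\<bar> powr q) \<partial>CM s)
       = (\<integral>\<^sup>+ u. Ph (quantile (mu s) u) (B0 u) \<partial>Lu)"
      by (simp add: Ph_def gfun_def)
    also have "\<dots> = (\<integral>\<^sup>+ u. ennreal ((1 - t) powr q) * ennreal (\<bar>quantile (mu s) u - B0 u\<bar> powr q) \<partial>Lu)"
    proof (rule nn_integral_cong)
      fix u
      have "t * quantile (mu s) u + (1 - t) * B0 u - quantile (mu s) u = (1 - t) * (B0 u - quantile (mu s) u)"
        by (simp add: algebra_simps)
      then have "\<bar>t * quantile (mu s) u + (1 - t) * B0 u - quantile (mu s) u\<bar> powr q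
          = (1 - t) powr q * \<bar>quantile (mu s) u - B0 u\<bar> powr q"
        using t by (simp add: abs_mult powr_mult abs_minus_commute)
      then show "Ph (quantile (mu s) u) (B0 u) = ennreal ((1 - t) powr q) * ennreal (\<bar>quantile (mu s) u - B0 u\<bar> powr q)"
        by (simp add: Ph_def ennreal_mult)
    qed
    also have "\<dots> = ennreal ((1 - t) powr q) * (\<integral>\<^sup>+ u. ennreal (\<bar>quantile (mu s) u - B0 u\<bar> powr q) \<partial>Lu)"
    proof (rule nn_integral_cmult)
      note Qm[measurable] = Q_Lu[OF s]
      show "(\<lambda>u. ennreal (\<bar>quantile (mu s) u - B0 u\<bar> powr q)) \<in> borel_measurable Lu" by measurable
    qed
    finally show ?thesis .
  qed
  note each = this
  show ?thesis unfolding risk_q_def Dq_def sum_distrib_left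
  proof (rule sum.cong[OF refl])
    fix s assume s: "s \<in> {1..K}"
    show "ennreal (w s) * (\<integral>\<^sup>+ \<omega>. ennreal (\<bar>gfun t (X \<omega>) (S \<omega>) - fstar (X \<omega>) (S \<omega>)\<bar> powr q) \<partial>CM s)
      = ennreal ((1 - t) powr q) * (ennreal (w s) * (\<integral>\<^sup>+ u. ennreal (\<bar>quantile (mu s) u - B0 u\<bar> powr q) \<partial>Lu))"
      unfolding each[OF s] by (simp add: mult_ac)
  qed
qed

lemma law_g:
  assumes s: "s \<in> {1..K}"
  shows "cond_law M X S (gfun t) s = distr Lu borel (\<lambda>u. t * quantile (mu s) u + (1 - t) * B0 u)"
proof -
  define G where "G x = t * x + (1 - t) * B0 (cdf (mu s) x)" for x
  have Gm: "G \<in> borel_measurable borel" unfolding G_def using cdf_meas[OF s] by measurable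
  have "cond_law M X S (gfun t) s = distr (CM s) borel (\<lambda>\<omega>. gfun t (X \<omega>) s)"
    by (rule law_eq[OF s gfun_meas])
  also have "\<dots> = distr (CM s) borel (\<lambda>\<omega>. G (fstar (X \<omega>) s))"
    by (simp add: G_def gfun_def mfun_def)
  also have "\<dots> = distr Lu borel (\<lambda>u. G (quantile (mu s) u))" by (rule transfer_distr[OF s Gm])
  also have "\<dots> = distr Lu borel (\<lambda>u. t * quantile (mu s) u + (1 - t) * B0 u)"
    by (rule distr_cong) (simp_all add: G_def FQ[OF s])
  finally show ?thesis .
qed

lemma Ug_le:
  assumes t: "0 \<le> t" "t \<le> 1"
  shows "unfair_q M X S K w q (gfun t) \<le> ennreal (t powr q) * Dq"
  unfolding unfair_q_def
proof (rule INF_lower2[OF nubar_Pq])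
  have "(\<Sum>s\<in>{1..K}. ennreal (w s) * Wq_pow q (cond_law M X S (gfun t) s) nubar)
     \<le> (\<Sum>s\<in>{1..K}. ennreal (w s) * (ennreal (t powr q) * (\<integral>\<^sup>+ u. ennreal (\<bar>quantile (mu s) u - B0 u\<bar> powr q) \<partial>Lu)))"
  proof (intro sum_mono mult_left_mono)
    fix s assume s: "s \<in> {1..K}"
    note Qm[measurable] = Q_Lu[OF s]
    have "Wq_pow q (cond_law M X S (gfun t) s) nubar \<le> (\<integral>\<^sup>+ u. ennreal (\<bar>(t * quantile (mu s) u + (1 - t) * B0 u) - B0 u\<bar> powr q) \<partial>Lu)"
      by (rule W_le_pair[OF _ B0_Lu prob_space_Lu]) (simp_all add: law_g[OF s] nubar_def)
    also have "\<dots> = (\<integral>\<^sup>+ u. ennreal (t powr q) * ennreal (\<bar>quantile (mu s) u - B0 u\<bar> powr q) \<partial>Lu)"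
    proof (rule nn_integral_cong)
      fix u
      have "t * quantile (mu s) u + (1 - t) * B0 u - B0 u = t * (quantile (mu s) u - B0 u)"
        by (simp add: algebra_simps)
      then show "ennreal (\<bar>(t * quantile (mu s) u + (1 - t) * B0 u) - B0 u\<bar> powr q) = ennreal (t powr q) * ennreal (\<bar>quantile (mu s) u - B0 u\<bar> powr q)"
        using t by (simp add: abs_mult powr_mult ennreal_mult)
    qed
    also have "\<dots> = ennreal (t powr q) * (\<integral>\<^sup>+ u. ennreal (\<bar>quantile (mu s) u - B0 u\<bar> powr q) \<partial>Lu)"
      by (rule nn_integral_cmult) measurable
    finally show "Wq_pow q (cond_law M X S (gfun t) s) nubar \<le> ennreal (t powr q) * (\<integral>\<^sup>+ u. ennreal (\<bar>quantile (mu s) u - B0 u\<bar> powr q) \<partial>Lu)" .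
  qed simp
  also have "\<dots> = ennreal (t powr q) * Dq" unfolding Dq_def by (simp add: sum_distrib_left mult_ac)
  finally show "(\<Sum>s\<in>{1..K}. ennreal (w s) * Wq_pow q (cond_law M X S (gfun t) s) nubar) \<le> ennreal (t powr q) * Dq" .
qed


lemma Tri:
  assumes f: "\<forall>s\<in>{1..K}. (\<lambda>x. f x s) \<in> borel_measurable N" and nu: "\<nu> \<in> Pq q"
    and a: "a > 0" and b: "b > 0"
    and Va: "(\<Sum>s\<in>{1..K}. ennreal (w s) * Wq_pow q (cond_law M X S f s) \<nu>) \<le> ennreal (a powr q)"
    and Rb: "risk_q M X S K w q fstar f \<le> ennreal (b powr q)"
  shows "Dq \<le> ennreal ((a + b) powr q)"
proof -
  have rd: "real_distribution \<nu>" using Pq_rd[OF nu] .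
  note Qn[measurable] = Q_meas[OF rd]
  have lrd: "s \<in> {1..K} \<Longrightarrow> real_distribution (cond_law M X S f s)" for s using law_rd f by blast
  have "Dq \<le> (\<Sum>s\<in>{1..K}. ennreal (w s) * Wq_pow q (mu s) \<nu>)"
    unfolding Ustar_eq[symmetric] unfair_q_def by (rule INF_lower[OF nu])
  also have "\<dots> = (\<Sum>s\<in>{1..K}. ennreal (w s) * (\<integral>\<^sup>+ u. ennreal (\<bar>(quantile (cond_law M X S f s) u - quantile \<nu> u) + (quantile (mu s) u - quantile (cond_law M X S f s) u)\<bar> powr q) \<partial>Lu))"
    by (intro sum.cong refl arg_cong2[where f="(*)"]) (simp add: W1D[OF q mu_rd rd])
  also have "\<dots> \<le> ennreal ((a + b) powr q)"
  proof (rule Mink[OF q a b _ w])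
    show "finite {1..K}" by simp
    show "(\<lambda>u. quantile (cond_law M X S f s) u - quantile \<nu> u) \<in> borel_measurable Lu" if s: "s \<in> {1..K}" for s
      using Q_meas[OF lrd[OF s]] by measurable
    show "(\<lambda>u. quantile (mu s) u - quantile (cond_law M X S f s) u) \<in> borel_measurable Lu" if s: "s \<in> {1..K}" for s
      using Q_meas[OF lrd[OF s]] Q_Lu[OF s] by measurable
    show "(\<Sum>s\<in>{1..K}. ennreal (w s) * (\<integral>\<^sup>+ u. ennreal (\<bar>quantile (cond_law M X S f s) u - quantile \<nu> u\<bar> powr q) \<partial>Lu)) \<le> ennreal (a powr q)"
    proof -
      have "(\<Sum>s\<in>{1..K}. ennreal (w s) * (\<integral>\<^sup>+ u. ennreal (\<bar>quantile (cond_law M X S f s) u - quantile \<nu> u\<bar> powr q) \<partial>Lu))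
        = (\<Sum>s\<in>{1..K}. ennreal (w s) * Wq_pow q (cond_law M X S f s) \<nu>)"
        by (intro sum.cong refl arg_cong2[where f="(*)"]) (simp add: W1D[OF q lrd rd])
      then show ?thesis using Va by simp
    qed
    have "(\<Sum>s\<in>{1..K}. ennreal (w s) * (\<integral>\<^sup>+ u. ennreal (\<bar>quantile (mu s) u - quantile (cond_law M X S f s) u\<bar> powr q) \<partial>Lu))
       = (\<Sum>s\<in>{1..K}. ennreal (w s) * Wq_pow q (mu s) (cond_law M X S f s))"
      by (intro sum.cong refl arg_cong2[where f="(*)"]) (simp add: W1D[OF q mu_rd lrd])
    also have "\<dots> \<le> risk_q M X S K w q fstar f"
      unfolding risk_q_def
    proof (intro sum_mono mult_left_mono)
      fix s assume s: "s \<in> {1..K}"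
      have m1: "(\<lambda>\<omega>. fstar (X \<omega>) (S \<omega>)) \<in> borel_measurable (CM s)"
        unfolding measurable_cong_sets[OF CM_sets refl] using comp_meas[OF fm] .
      have m2: "(\<lambda>\<omega>. f (X \<omega>) (S \<omega>)) \<in> borel_measurable (CM s)"
        unfolding measurable_cong_sets[OF CM_sets refl] using comp_meas[OF f] .
      have "Wq_pow q (mu s) (cond_law M X S f s) \<le> (\<integral>\<^sup>+ \<omega>. ennreal (\<bar>fstar (X \<omega>) (S \<omega>) - f (X \<omega>) (S \<omega>)\<bar> powr q) \<partial>CM s)"
        by (rule W_le_pair[OF m1 m2 CM_prob[OF s]]) (simp_all add: cond_law_def)
      then show "Wq_pow q (mu s) (cond_law M X S f s) \<le> (\<integral>\<^sup>+ \<omega>. ennreal (\<bar>f (X \<omega>) (S \<omega>) - fstar (X \<omega>) (S \<omega>)\<bar> powr q) \<partial>CM s)"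
        by (simp add: abs_minus_commute)
    qed simp
    finally show "(\<Sum>s\<in>{1..K}. ennreal (w s) * (\<integral>\<^sup>+ u. ennreal (\<bar>quantile (mu s) u - quantile (cond_law M X S f s) u\<bar> powr q) \<partial>Lu)) \<le> ennreal (b powr q)"
      using Rb by simp
  qed
  finally show ?thesis .
qed


lemma tri_real:
  assumes f: "\<forall>s\<in>{1..K}. (\<lambda>x. f x s) \<in> borel_measurable N" and nu: "\<nu> \<in> Pq q"
    and V: "(\<Sum>s\<in>{1..K}. ennreal (w s) * Wq_pow q (cond_law M X S f s) \<nu>) \<noteq> \<top>"
    and R: "risk_q M X S K w q fstar f \<noteq> \<top>"
  shows "enn2real Dq powr (1 / q) \<le> enn2real (\<Sum>s\<in>{1..K}. ennreal (w s) * Wq_pow q (cond_law M X S f s) \<nu>) powr (1 / q)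
     + enn2real (risk_q M X S K w q fstar f) powr (1 / q)"
proof (rule arith_tri[OF q])
  fix a b :: real assume a: "a > 0" and b: "b > 0"
    and Va: "enn2real (\<Sum>s\<in>{1..K}. ennreal (w s) * Wq_pow q (cond_law M X S f s) \<nu>) \<le> a powr q"
    and Rb: "enn2real (risk_q M X S K w q fstar f) \<le> b powr q"
  have "Dq \<le> ennreal ((a + b) powr q)"
  proof (rule Tri[OF f nu a b])
    show "(\<Sum>s\<in>{1..K}. ennreal (w s) * Wq_pow q (cond_law M X S f s) \<nu>) \<le> ennreal (a powr q)"
      using Va V by (metis ennreal_enn2real_if ennreal_leI)
    show "risk_q M X S K w q fstar f \<le> ennreal (b powr q)"
      using Rb R by (metis ennreal_enn2real_if ennreal_leI)
  qed
  then show "enn2real Dq \<le> (a + b) powr q"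
    using Dq_fin by (simp add: enn2real_leI)
qed auto

lemma main:
  assumes al: "0 \<le> \<alpha>" "\<alpha> \<le> 1"
  defines "t \<equiv> \<alpha> powr (1 / q)"
  shows "(\<forall>s\<in>{1..K}. (\<lambda>x. gfun t x s) \<in> borel_measurable N) \<and>
     unfair_q M X S K w q (gfun t) \<le> ennreal \<alpha> * unfair_q M X S K w q fstar \<and>
     (\<forall>f. (\<forall>s\<in>{1..K}. (\<lambda>x. f x s) \<in> borel_measurable N) \<longrightarrow>
        unfair_q M X S K w q f \<le> ennreal \<alpha> * unfair_q M X S K w q fstar \<longrightarrow>
        risk_q M X S K w q fstar (gfun t) \<le> risk_q M X S K w q fstar f) \<and>
     risk_q M X S K w q fstar (gfun t) = ennreal ((1 - t) powr q) * unfair_q M X S K w q fstar \<and>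
     unfair_q M X S K w q (gfun t) = ennreal \<alpha> * unfair_q M X S K w q fstar"
proof -
  have q0: "q > 0" using q by simp
  have t: "0 \<le> t" "t \<le> 1" using al q0 by (auto simp: t_def powr_le1)
  have tq: "t powr q = \<alpha>" unfolding t_def using root_pow[OF q0 al(1)] .
  define Dr where "Dr = enn2real Dq"
  have DqE: "Dq = ennreal Dr" using Dq_fin by (simp add: Dr_def)
  have Dr0: "Dr \<ge> 0" by (simp add: Dr_def)
  have Rg: "risk_q M X S K w q fstar (gfun t) = ennreal ((1 - t) powr q * Dr)"
    using risk_g[OF t] DqE Dr0 by (simp add: ennreal_mult)
  have Ule: "unfair_q M X S K w q (gfun t) \<le> ennreal \<alpha> * Dq"
    using Ug_le[OF t] tq by simp
  have Uge: "ennreal \<alpha> * Dq \<le> unfair_q M X S K w q (gfun t)"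
    unfolding unfair_q_def
  proof (rule INF_greatest)
    fix \<nu> assume nu: "\<nu> \<in> Pq q"
    define V where "V = (\<Sum>s\<in>{1..K}. ennreal (w s) * Wq_pow q (cond_law M X S (gfun t) s) \<nu>)"
    show "ennreal \<alpha> * Dq \<le> (\<Sum>s\<in>{1..K}. ennreal (w s) * Wq_pow q (cond_law M X S (gfun t) s) \<nu>)"
    proof (cases "V = \<top>")
      case True then show ?thesis using V_def by (metis top_greatest)
    next
      case False
      have R: "risk_q M X S K w q fstar (gfun t) \<noteq> \<top>" using Rg by simp
      have "enn2real Dq powr (1 / q) \<le> enn2real V powr (1 / q) + enn2real (risk_q M X S K w q fstar (gfun t)) powr (1 / q)"
        unfolding V_def by (rule tri_real[OF gfun_meas nu False[unfolded V_def] R])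
      then have "Dr powr (1 / q) \<le> enn2real V powr (1 / q) + ((1 - t) powr q * Dr) powr (1 / q)"
        using Rg t Dr0 by (simp add: Dr_def[symmetric])
      then have "t powr q * Dr \<le> enn2real V" using final_arith1[OF q Dr0 enn2real_nonneg t] by blast
      then have "ennreal (\<alpha> * Dr) \<le> V" using False tq by (metis ennreal_enn2real_if ennreal_leI)
      then show ?thesis using DqE al Dr0 by (simp add: V_def ennreal_mult)
    qed
  qed
  have Opt: "risk_q M X S K w q fstar (gfun t) \<le> risk_q M X S K w q fstar f"
    if f: "\<forall>s\<in>{1..K}. (\<lambda>x. f x s) \<in> borel_measurable N"
      and Uf: "unfair_q M X S K w q f \<le> ennreal \<alpha> * unfair_q M X S K w q fstar" for f
  proof (cases "risk_q M X S K w q fstar f = \<top>")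
    case True then show ?thesis by simp
  next
    case False
    define Rr where "Rr = enn2real (risk_q M X S K w q fstar f)"
    have RfE: "risk_q M X S K w q fstar f = ennreal Rr" using False by (simp add: Rr_def less_top)
    have Rr0: "Rr \<ge> 0" by (simp add: Rr_def)
    define c where "c = Dr powr (1 / q) - Rr powr (1 / q)"
    have "(1 - t) powr q * Dr \<le> Rr"
    proof (rule final_arith2[OF q Dr0 Rr0 t c_def])
      assume c0: "c > 0"
      have "ennreal (c powr q) \<le> unfair_q M X S K w q f"
        unfolding unfair_q_def
      proof (rule INF_greatest)
        fix \<nu> assume nu: "\<nu> \<in> Pq q"
        define V where "V = (\<Sum>s\<in>{1..K}. ennreal (w s) * Wq_pow q (cond_law M X S f s) \<nu>)"
        show "ennreal (c powr q) \<le> (\<Sum>s\<in>{1..K}. ennreal (w s) * Wq_pow q (cond_law M X S f s) \<nu>)"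
        proof (cases "V = \<top>")
          case True then show ?thesis using V_def by (metis top_greatest)
        next
          case Vf: False
          have "enn2real Dq powr (1 / q) \<le> enn2real V powr (1 / q) + enn2real (risk_q M X S K w q fstar f) powr (1 / q)"
            unfolding V_def by (rule tri_real[OF f nu Vf[unfolded V_def] False])
          then have "c \<le> enn2real V powr (1 / q)" by (simp add: c_def Dr_def Rr_def)
          then have "c powr q \<le> (enn2real V powr (1 / q)) powr q" using c0 q0 by (intro powr_mono2) auto
          then have "c powr q \<le> enn2real V" using root_pow[OF q0, of "enn2real V"] by simp
          then show ?thesis using Vf by (metis V_def ennreal_enn2real_if ennreal_leI)
        qed
      qed
      also have "\<dots> \<le> ennreal (\<alpha> * Dr)" using Uf Ustar_eq DqE al Dr0 by (simp add: ennreal_mult)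
      finally have "c powr q \<le> \<alpha> * Dr" using al Dr0 by (simp add: ennreal_le_iff)
      then show "c powr q \<le> t powr q * Dr" using tq by simp
    qed
    then show ?thesis using Rg RfE by (simp add: ennreal_leI)
  qed
  show ?thesis
    using gfun_meas Ule Uge Opt Rg DqE Ustar_eq t Dr0 by (auto simp: ennreal_mult intro: antisym)
qed

end

theorem theorem9:
  fixes M :: "'a measure" and X :: "'a \<Rightarrow> real ^ 'p" and S :: "'a \<Rightarrow> nat"
    and K :: nat and w :: "nat \<Rightarrow> real" and q :: real and \<alpha> :: real
    and fstar :: "real ^ 'p \<Rightarrow> nat \<Rightarrow> real"
  assumes "prob_space M"
    and "K \<ge> 1"
    and "X \<in> borel_measurable M"
    and "S \<in> measurable M (count_space UNIV)"
    and "\<forall>\<omega>\<in>space M. S \<omega> \<in> {1..K}"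
    and "\<forall>s\<in>{1..K}. measure M {\<omega> \<in> space M. S \<omega> = s} > 0"
    and "\<forall>s\<in>{1..K}. (\<lambda>x. fstar x s) \<in> borel_measurable borel"
    and "\<forall>s. w s \<ge> 0" and "(\<Sum>s\<in>{1..K}. w s) = 1"
    and "q \<ge> 1"
    and "\<forall>s\<in>{1..K}. \<forall>x. measure (cond_law M X S fstar s) {x} = 0"
    and "\<forall>s\<in>{1..K}. (\<integral>\<^sup>+ x. ennreal (\<bar>x\<bar> powr q) \<partial>cond_law M X S fstar s) < \<infinity>"
    and "0 \<le> \<alpha>" and "\<alpha> \<le> 1"
  shows "\<exists>m :: real ^ 'p \<Rightarrow> nat \<Rightarrow> real.
    (\<forall>x. \<forall>s\<in>{1..K}.
       is_arg_min (\<lambda>y. \<Sum>s'\<in>{1..K}. w s' *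
           \<bar>quantile (cond_law M X S fstar s') (cdf (cond_law M X S fstar s) (fstar x s)) - y\<bar> powr q)
         (\<lambda>_. True) (m x s)) \<and>
    (let g = (\<lambda>x s. \<alpha> powr (1 / q) * fstar x s + (1 - \<alpha> powr (1 / q)) * m x s) in
       (\<forall>s\<in>{1..K}. (\<lambda>x. g x s) \<in> borel_measurable borel) \<and>
       unfair_q M X S K w q g \<le> ennreal \<alpha> * unfair_q M X S K w q fstar \<and>
       (\<forall>f :: real ^ 'p \<Rightarrow> nat \<Rightarrow> real.
          (\<forall>s\<in>{1..K}. (\<lambda>x. f x s) \<in> borel_measurable borel) \<longrightarrow>
          unfair_q M X S K w q f \<le> ennreal \<alpha> * unfair_q M X S K w q fstar \<longrightarrow>
          risk_q M X S K w q fstar g \<le> risk_q M X S K w q fstar f) \<and>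
       risk_q M X S K w q fstar g
         = ennreal ((1 - \<alpha> powr (1 / q)) powr q) * unfair_q M X S K w q fstar \<and>
       unfair_q M X S K w q g = ennreal \<alpha> * unfair_q M X S K w q fstar)"
proof -
  interpret wsetup w K q
    by unfold_locales (use assms in auto)
  interpret thm_setup w K q M borel X S fstar
    by (intro thm_setup.intro thm_setup_axioms.intro wsetup_axioms) (use assms in auto)
  define t where "t = \<alpha> powr (1 / q)"
  have g: "gfun t = (\<lambda>x s. \<alpha> powr (1 / q) * fstar x s + (1 - \<alpha> powr (1 / q)) * mfun x s)"
    by (simp add: gfun_def t_def fun_eq_iff)
  note mn = main[OF assms(13,14), folded t_def, unfolded g, unfolded t_def]
  show ?thesis
    unfolding Let_def
    apply (rule exI[of _ mfun])
    apply (intro conjI)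
    subgoal using mfun_argmin by blast
    using mn by blast+
qed

end
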